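(* Let $\Omega$ be an angular domain of opening $\pi/\alpha$, and let $f$ be a slice regular function on $\Omega$, continuous on $\overline{\Omega}$, of order $\rho<\alpha$. If there exists $M\ge0$ such that $|f|\le M$ on $\partial\Omega$, then $|f|\le M$ on $\Omega$.
   Context: $\mathbb{H}$ denotes the quaternions with Euclidean norm $|q|$; $\mathbb{S}=\{ix_1+jx_2+kx_3: x_1^2+x_2^2+x_3^2=1\}$; for $I\in\mathbb{S}$, $L_I=\mathbb{R}+\mathbb{R}I$, $e^{I\vartheta}=\cos\vartheta+I\sin\vartheta$, and $\Omega_I=\Omega\cap L_I$. A function $f:\Omega\to\mathbb{H}$ on an open set $\Omega$ is slice regular if for every $I\in\mathbb{S}$ its restriction $f_I$ to $\Omega_I$ satisfies $\frac12\left(\frac{\partial}{\partial x}+I\frac{\partial}{\partial y}\right)f_I(x+yI)=0$. A domain $\Omega$ is a slice domain if $\Omega\cap\mathbb{R}\ne\emptyset$ and each $\Omega_I$ is a domain in $L_I$. A slice domain $\Omega$ is an angular domain if for every $I\in\mathbb{S}$, $\Omega_I=\{re^{I(\zeta_I+\vartheta)}: r>0,\ |\vartheta|<\varphi_I/2\}$ for some $\zeta_I\in\mathbb{R}$, $0<\varphi_I<2\pi$; its opening is $\sup_{I\in\mathbb{S}}\varphi_I$. For $f$ slice regular on $\Omega$ and continuous up to the boundary, $M_f(r,\Omega)=\max\{|f(q)|: q\in\overline\Omega,\ |q|=r\}$ and the order of $f$ is $\rho=\limsup_{r\to+\infty}\frac{\ln^+\ln^+M_f(r,\Omega)}{\ln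 r}$, where $\ln^+x=\max\{\ln x,0\}$. *)

theory Defs
  imports "HOL-Analysis.Analysis"
begin

text \<open>Quaternions are modelled as real^4: component 1 is the real part,
components 2,3,4 the i, j, k parts. The norm is the Euclidean norm.\<close>

type_synonym quat = "real^4"

definition qmult :: "quat \<Rightarrow> quat \<Rightarrow> quat" where
  "qmult p q = vector
     [p$1*q$1 - p$2*q$2 - p$3*q$3 - p$4*q$4,
      p$1*q$2 + p$2*q$1 + p$3*q$4 - p$4*q$3,
      p$1*q$3 - p$2*q$4 + p$3*q$1 + p$4*q$2,
      p$1*q$4 + p$2*q$3 - p$3*q$2 + p$4*q$1]"

definition qreal :: "real \<Rightarrow> quat" where
  "qreal r = vector [r, 0, 0, 0]"

definition imag_units :: "quat set" where
  "imag_units = {q. q$1 = 0 \<and> (q$2)^2 + (q$3)^2 + (q$4)^2 = 1}"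

definition slice_plane :: "quat \<Rightarrow> quat set" where
  "slice_plane I = {qreal x + y *\<^sub>R I | x y. True}"

definition qexp_I :: "quat \<Rightarrow> real \<Rightarrow> quat" where
  "qexp_I I \<theta> = qreal (cos \<theta>) + sin \<theta> *\<^sub>R I"

definition slice_regular :: "(quat \<Rightarrow> quat) \<Rightarrow> quat set \<Rightarrow> bool" where
  "slice_regular f \<Omega> \<longleftrightarrow> open \<Omega> \<and>
     (\<forall>I\<in>imag_units. \<forall>x y. qreal x + y *\<^sub>R I \<in> \<Omega> \<longrightarrow>
        (\<exists>D. ((\<lambda>(s,t). f (qreal s + t *\<^sub>R I)) has_derivative D) (at (x, y))
             \<and> D (1, 0) + qmult I (D (0, 1)) = 0))"

definition slice_domain :: "quat set \<Rightarrow> bool" where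
  "slice_domain \<Omega> \<longleftrightarrow> open \<Omega> \<and> connected \<Omega> \<and> \<Omega> \<inter> range qreal \<noteq> {} \<and>
     (\<forall>I\<in>imag_units. openin (top_of_set (slice_plane I)) (\<Omega> \<inter> slice_plane I)
                      \<and> connected (\<Omega> \<inter> slice_plane I))"

definition sector :: "quat \<Rightarrow> real \<Rightarrow> real \<Rightarrow> quat set" where
  "sector I \<zeta> \<phi> = {r *\<^sub>R qexp_I I (\<zeta> + \<theta>) | r \<theta>. r > 0 \<and> \<bar>\<theta>\<bar> < \<phi> / 2}"

definition angular_domain :: "quat set \<Rightarrow> bool" where
  "angular_domain \<Omega> \<longleftrightarrow> slice_domain \<Omega> \<and>
     (\<forall>I\<in>imag_units. \<exists>\<zeta> \<phi>. 0 < \<phi> \<and> \<phi> < 2 * pi \<and> \<Omega> \<inter> slice_plane I = sector I \<zeta> \<phi>)"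

definition angle_opening :: "quat set \<Rightarrow> real" where
  "angle_opening \<Omega> = Sup {\<phi>. \<exists>I\<in>imag_units. \<exists>\<zeta>. 0 < \<phi> \<and> \<phi> < 2 * pi \<and>
                          \<Omega> \<inter> slice_plane I = sector I \<zeta> \<phi>}"

definition max_modulus :: "(quat \<Rightarrow> quat) \<Rightarrow> quat set \<Rightarrow> real \<Rightarrow> real" where
  "max_modulus f \<Omega> r = Sup ((\<lambda>q. norm (f q)) ` (closure \<Omega> \<inter> {q. norm q = r}))"

text \<open>ln^+ x = max (ln x) 0, with ln^+ x = 0 for x <= 1 (covering x = 0).\<close>
definition lnp :: "real \<Rightarrow> real" where
  "lnp x = (if x \<le> 1 then 0 else ln x)"

definition order_of :: "(quat \<Rightarrow> quat) \<Rightarrow> quat set \<Rightarrow> ereal" where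
  "order_of f \<Omega> = Limsup at_top (\<lambda>r::real. ereal (lnp (lnp (max_modulus f \<Omega> r)) / ln r))"

end

theory Submission
  imports Defs "HOL-Analysis.Analysis"
begin


definition oint :: "(real \<Rightarrow> complex) \<Rightarrow> real \<Rightarrow> real \<Rightarrow> complex" where
  "oint f a b = (if a \<le> b then integral {a..b} f else - integral {b..a} f)"

lemma oint_swap: "oint f a b = - oint f b a"
  by (auto simp: oint_def)

lemma oint_same[simp]: "oint f a a = 0"
  by (simp add: oint_def)

lemma oint_combine:
  assumes "continuous_on {min a (min b c)..max a (max b c)} f"
  shows "oint f a b + oint f b c = oint f a c"
proof -
  have I: "f integrable_on {u..v}" if "min a (min b c) \<le> u" "v \<le> max a (max b c)" for u v
    by (rule integrable_continuous_real, rule continuous_on_subset[OF assms]) (use that in auto)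
  have C: "integral {u..w} f + integral {w..v} f = integral {u..v} f"
    if "u \<le> w" "w \<le> v" "min a (min b c) \<le> u" "v \<le> max a (max b c)" for u v w
    by (rule Henstock_Kurzweil_Integration.integral_combine) (use that I in auto)
  show ?thesis
    unfolding oint_def
    using C[of a b c] C[of a c b] C[of b a c] C[of b c a] C[of c a b] C[of c b a]
    by (auto simp: algebra_simps)
qed

lemma oint_bound:
  assumes "continuous_on {min a b..max a b} f" "\<And>x. x \<in> {min a b..max a b} \<Longrightarrow> norm (f x) \<le> B"
  shows "norm (oint f a b) \<le> B * \<bar>b - a\<bar>"
proof -
  have "norm (integral {u..v} f) \<le> B * (v - u)" if "u \<le> v" "{u..v} = {min a b..max a b}" for u v
  proof -
    have "norm (integral {u..v} f) \<le> integral {u..v} (\<lambda>_. B)"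
      by (rule integral_norm_bound_integral) (use assms that in \<open>auto intro: integrable_continuous_real\<close>)
    also have "\<dots> = B * (v - u)" using that by simp
    finally show ?thesis .
  qed
  then show ?thesis unfolding oint_def
    by (cases "a \<le> b") (auto simp: min_def max_def)
qed

lemma oint_deriv:
  assumes "\<And>x. x \<in> {min a b..max a b} \<Longrightarrow> (F has_vector_derivative f x) (at x)"
  shows "oint f a b = F b - F a"
proof -
  have "integral {u..v} f = F v - F u" if "u \<le> v" "{u..v} = {min a b..max a b}" for u v
  proof -
    have "(f has_integral (F v - F u)) {u..v}"
      by (rule fundamental_theorem_of_calculus) (use that assms in \<open>auto intro: has_vector_derivative_at_within\<close>)
    then show ?thesis by (simp add: integral_unique)
  qed
  then show ?thesis unfolding oint_def
    by (cases "a \<le> b") (auto simp: min_def max_def)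
qed


definition hl :: "(complex \<Rightarrow> complex) \<Rightarrow> real \<Rightarrow> real \<Rightarrow> real \<Rightarrow> complex" where
  "hl g y a b = oint (\<lambda>x. g (Complex x y)) a b"
definition vl :: "(complex \<Rightarrow> complex) \<Rightarrow> real \<Rightarrow> real \<Rightarrow> real \<Rightarrow> complex" where
  "vl g x a b = \<i> * oint (\<lambda>y. g (Complex x y)) a b"
definition rint where
  "rint g x1 x2 y1 y2 = hl g y1 x1 x2 + vl g x2 y1 y2 - hl g y2 x1 x2 - vl g x1 y1 y2"
definition rect :: "real \<Rightarrow> real \<Rightarrow> real \<Rightarrow> real \<Rightarrow> complex set" where
  "rect x1 x2 y1 y2 = {z. Re z \<in> {min x1 x2..max x1 x2} \<and> Im z \<in> {min y1 y2..max y1 y2}}"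

lemma Complex_in_rect: "Complex x y \<in> rect x1 x2 y1 y2 \<longleftrightarrow> x \<in> {min x1 x2..max x1 x2} \<and> y \<in> {min y1 y2..max y1 y2}"
  by (simp add: rect_def)

lemma cont_hline:
  assumes "continuous_on U g" "\<And>x. x \<in> {a..b} \<Longrightarrow> Complex x y \<in> U"
  shows "continuous_on {a..b} (\<lambda>x. g (Complex x y))"
proof -
  have "continuous_on {a..b} (\<lambda>x. Complex x y)"
    unfolding Complex_eq by (intro continuous_intros)
  then show ?thesis
    by (rule continuous_on_compose2[OF assms(1)]) (use assms(2) in auto)
qed

lemma cont_vline:
  assumes "continuous_on U g" "\<And>y. y \<in> {a..b} \<Longrightarrow> Complex x y \<in> U"
  shows "continuous_on {a..b} (\<lambda>y. g (Complex x y))"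
proof -
  have "continuous_on {a..b} (\<lambda>y. Complex x y)"
    unfolding Complex_eq by (intro continuous_intros)
  then show ?thesis
    by (rule continuous_on_compose2[OF assms(1)]) (use assms(2) in auto)
qed

lemma rint_split_x:
  assumes "continuous_on U g"
    "\<And>x y. x \<in> {min x1 (min xm x2)..max x1 (max xm x2)} \<Longrightarrow> y \<in> {min y1 y2..max y1 y2} \<Longrightarrow> Complex x y \<in> U"
  shows "rint g x1 x2 y1 y2 = rint g x1 xm y1 y2 + rint g xm x2 y1 y2"
proof -
  have y1: "y1 \<in> {min y1 y2..max y1 y2}" and y2: "y2 \<in> {min y1 y2..max y1 y2}" by auto
  have "hl g y1 x1 xm + hl g y1 xm x2 = hl g y1 x1 x2"
    unfolding hl_def by (rule oint_combine, rule cont_hline[OF assms(1)], rule assms(2)) (use y1 in auto)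
  moreover have "hl g y2 x1 xm + hl g y2 xm x2 = hl g y2 x1 x2"
    unfolding hl_def by (rule oint_combine, rule cont_hline[OF assms(1)], rule assms(2)) (use y2 in auto)
  ultimately show ?thesis unfolding rint_def by (simp add: algebra_simps)
qed

lemma rint_split_y:
  assumes "continuous_on U g"
    "\<And>x y. x \<in> {min x1 x2..max x1 x2} \<Longrightarrow> y \<in> {min y1 (min ym y2)..max y1 (max ym y2)} \<Longrightarrow> Complex x y \<in> U"
  shows "rint g x1 x2 y1 y2 = rint g x1 x2 y1 ym + rint g x1 x2 ym y2"
proof -
  have x1: "x1 \<in> {min x1 x2..max x1 x2}" and x2: "x2 \<in> {min x1 x2..max x1 x2}" by auto
  have "vl g x1 y1 ym + vl g x1 ym y2 = vl g x1 y1 y2"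
    unfolding vl_def distrib_left[symmetric]
    by (subst oint_combine, rule cont_vline[OF assms(1)], rule assms(2)) (use x1 in auto)
  moreover have "vl g x2 y1 ym + vl g x2 ym y2 = vl g x2 y1 y2"
    unfolding vl_def distrib_left[symmetric]
    by (subst oint_combine, rule cont_vline[OF assms(1)], rule assms(2)) (use x2 in auto)
  ultimately show ?thesis unfolding rint_def by (simp add: algebra_simps)
qed

lemma rint_primitive:
  assumes "\<And>z. z \<in> rect x1 x2 y1 y2 \<Longrightarrow> (G has_field_derivative g z) (at z)"
  shows "rint g x1 x2 y1 y2 = 0"
proof -
  have H: "hl g y a b = G (Complex b y) - G (Complex a y)"
    if "y \<in> {min y1 y2..max y1 y2}" "{min a b..max a b} = {min x1 x2..max x1 x2}" for y a b
    unfolding hl_def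
  proof (rule oint_deriv[where F = "\<lambda>x. G (Complex x y)"])
    fix x assume x: "x \<in> {min a b..max a b}"
    have d1: "((\<lambda>x. Complex x y) has_vector_derivative 1) (at x)"
      unfolding Complex_eq by (auto intro!: derivative_eq_intros simp: has_vector_derivative_def fun_eq_iff scaleR_conv_of_real)
    have "((G \<circ> (\<lambda>x. Complex x y)) has_vector_derivative (1 * g (Complex x y))) (at x)"
      by (rule field_vector_diff_chain_at[OF d1 assms]) (use x that in \<open>auto simp: rect_def\<close>)
    then show "((\<lambda>x. G (Complex x y)) has_vector_derivative g (Complex x y)) (at x)"
      by (simp add: o_def)
  qed
  have V: "vl g x a b = G (Complex x b) - G (Complex x a)"
    if "x \<in> {min x1 x2..max x1 x2}" "{min a b..max a b} = {min y1 y2..max y1 y2}" for x a b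
  proof -
    have "oint (\<lambda>y. \<i> * g (Complex x y)) a b = G (Complex x b) - G (Complex x a)"
    proof (rule oint_deriv[where F = "\<lambda>y. G (Complex x y)"])
      fix y assume y: "y \<in> {min a b..max a b}"
      have d1: "((\<lambda>y. Complex x y) has_vector_derivative \<i>) (at y)"
        unfolding Complex_eq by (auto intro!: derivative_eq_intros simp: has_vector_derivative_def fun_eq_iff scaleR_conv_of_real)
      have "((G \<circ> (\<lambda>y. Complex x y)) has_vector_derivative (\<i> * g (Complex x y))) (at y)"
        by (rule field_vector_diff_chain_at[OF d1 assms]) (use y that in \<open>auto simp: rect_def\<close>)
      then show "((\<lambda>y. G (Complex x y)) has_vector_derivative \<i> * g (Complex x y)) (at y)"
        by (simp add: o_def)
    qed
    moreover have "oint (\<lambda>y. \<i> * g (Complex x y)) a b = \<i> * oint (\<lambda>y. g (Complex x y)) a b"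
      by (simp add: oint_def)
    ultimately show ?thesis by (simp add: vl_def)
  qed
  show ?thesis unfolding rint_def
    by (subst H, simp, simp add: min_def max_def, subst H, simp, simp add: min_def max_def,
        subst V, simp, simp add: min_def max_def, subst V, simp, simp add: min_def max_def) simp
qed

lemma rint_degenerate_x: "rint g x x y1 y2 = 0"
  by (simp add: rint_def hl_def)

lemma rint_degenerate_y: "rint g x1 x2 y y = 0"
  by (simp add: rint_def vl_def)


lemma oint_diff:
  assumes "continuous_on {min a b..max a b} f" "continuous_on {min a b..max a b} h"
  shows "oint (\<lambda>x. f x - h x) a b = oint f a b - oint h a b"
  using assms unfolding oint_def
  by (auto simp: min_def max_def integral_diff integrable_continuous_real split: if_splits)

lemma rint_diff:
  assumes "continuous_on (rect x1 x2 y1 y2) g" "continuous_on (rect x1 x2 y1 y2) h"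
  shows "rint (\<lambda>z. g z - h z) x1 x2 y1 y2 = rint g x1 x2 y1 y2 - rint h x1 x2 y1 y2"
proof -
  have ch: "continuous_on {min x1 x2..max x1 x2} (\<lambda>x. k (Complex x y))"
    if "continuous_on (rect x1 x2 y1 y2) k" "y \<in> {y1, y2}" for k y
    by (rule cont_hline[OF that(1)]) (use that(2) in \<open>auto simp: rect_def\<close>)
  have cv: "continuous_on {min y1 y2..max y1 y2} (\<lambda>y. k (Complex x y))"
    if "continuous_on (rect x1 x2 y1 y2) k" "x \<in> {x1, x2}" for k x
    by (rule cont_vline[OF that(1)]) (use that(2) in \<open>auto simp: rect_def\<close>)
  show ?thesis unfolding rint_def hl_def vl_def
    by (simp add: oint_diff[OF ch[OF assms(1)] ch[OF assms(2)]] oint_diff[OF cv[OF assms(1)] cv[OF assms(2)]]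
        algebra_simps)
qed

lemma rint_bound:
  assumes "continuous_on (rect x1 x2 y1 y2) e" "\<And>z. z \<in> rect x1 x2 y1 y2 \<Longrightarrow> norm (e z) \<le> B"
  shows "norm (rint e x1 x2 y1 y2) \<le> B * (2 * \<bar>x2 - x1\<bar> + 2 * \<bar>y2 - y1\<bar>)"
proof -
  have h: "norm (hl e y x1 x2) \<le> B * \<bar>x2 - x1\<bar>" if "y \<in> {y1, y2}" for y
    unfolding hl_def
    by (rule oint_bound, rule cont_hline[OF assms(1)]) (use that in \<open>auto simp: rect_def intro!: assms(2)\<close>)
  have v: "norm (vl e x y1 y2) \<le> B * \<bar>y2 - y1\<bar>" if "x \<in> {x1, x2}" for x
    unfolding vl_def norm_mult
    by (simp, rule oint_bound, rule cont_vline[OF assms(1)]) (use that in \<open>auto simp: rect_def intro!: assms(2)\<close>)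
  have "norm (rint e x1 x2 y1 y2) \<le> norm (hl e y1 x1 x2) + norm (vl e x2 y1 y2) + norm (hl e y2 x1 x2) + norm (vl e x1 y1 y2)"
    unfolding rint_def by (smt (verit) norm_triangle_ineq4 norm_triangle_ineq)
  also have "\<dots> \<le> B * (2 * \<bar>x2 - x1\<bar> + 2 * \<bar>y2 - y1\<bar>)"
    using h[of y1] h[of y2] v[of x1] v[of x2] by (simp add: algebra_simps)
  finally show ?thesis .
qed

lemma rect_closed: "closed (rect x1 x2 y1 y2)"
proof -
  have e: "rect x1 x2 y1 y2 = {z. min x1 x2 \<le> Re z} \<inter> {z. Re z \<le> max x1 x2} \<inter> {z. min y1 y2 \<le> Im z} \<inter> {z. Im z \<le> max y1 y2}"
    by (auto simp: rect_def)
  show ?thesis unfolding e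
    by (intro closed_Int closed_Collect_le continuous_intros)
qed

lemma rect_ne: "rect x1 x2 y1 y2 \<noteq> {}"
proof -
  have "Complex x1 y1 \<in> rect x1 x2 y1 y2" by (simp add: rect_def)
  then show ?thesis by blast
qed

definition quadok where
  "quadok g (r :: real \<times> real \<times> real \<times> real) r' \<longleftrightarrow>
    (case r of (x1, x2, y1, y2) \<Rightarrow> case r' of (a1, a2, b1, b2) \<Rightarrow>
      x1 \<le> a1 \<and> a1 \<le> a2 \<and> a2 \<le> x2 \<and> y1 \<le> b1 \<and> b1 \<le> b2 \<and> b2 \<le> y2 \<and>
      a2 - a1 = (x2 - x1) / 2 \<and> b2 - b1 = (y2 - y1) / 2 \<and>
      norm (rint g a1 a2 b1 b2) \<ge> norm (rint g x1 x2 y1 y2) / 4)"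

lemma quad_step:
  assumes "continuous_on U g" "x1 \<le> x2" "y1 \<le> y2" "rect x1 x2 y1 y2 \<subseteq> U"
  shows "\<exists>r'. quadok g (x1, x2, y1, y2) r'"
proof (rule ccontr)
  assume nex: "\<not> ?thesis"
  define xm where "xm = (x1 + x2) / 2"
  define ym where "ym = (y1 + y2) / 2"
  have in1: "Complex x y \<in> U" if "x \<in> {x1..x2}" "y \<in> {y1..y2}" for x y
    using assms(4) that by (auto simp: rect_def)
  have sx: "rint g x1 x2 y1 y2 = rint g x1 xm y1 y2 + rint g xm x2 y1 y2"
    by (rule rint_split_x[OF assms(1)], rule in1) (use assms in \<open>auto simp: xm_def\<close>)
  have sy1: "rint g x1 xm y1 y2 = rint g x1 xm y1 ym + rint g x1 xm ym y2"
    by (rule rint_split_y[OF assms(1)], rule in1) (use assms in \<open>auto simp: xm_def ym_def\<close>)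
  have sy2: "rint g xm x2 y1 y2 = rint g xm x2 y1 ym + rint g xm x2 ym y2"
    by (rule rint_split_y[OF assms(1)], rule in1) (use assms in \<open>auto simp: xm_def ym_def\<close>)
  let ?N = "norm (rint g x1 x2 y1 y2)"
  have lt: "norm (rint g a1 a2 b1 b2) < ?N / 4"
    if "x1 \<le> a1 \<and> a1 \<le> a2 \<and> a2 \<le> x2 \<and> y1 \<le> b1 \<and> b1 \<le> b2 \<and> b2 \<le> y2 \<and>
      a2 - a1 = (x2 - x1) / 2 \<and> b2 - b1 = (y2 - y1) / 2" for a1 a2 b1 b2
  proof -
    have "\<not> quadok g (x1, x2, y1, y2) (a1, a2, b1, b2)" using nex by blast
    then show ?thesis using that unfolding quadok_def by auto
  qed
  have "?N \<le> norm (rint g x1 xm y1 ym) + norm (rint g x1 xm ym y2) + norm (rint g xm x2 y1 ym) + norm (rint g xm x2 ym y2)"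
    unfolding sx sy1 sy2 by (smt (verit) norm_triangle_ineq)
  also have "\<dots> < ?N"
    using lt[of x1 xm y1 ym] lt[of x1 xm ym y2] lt[of xm x2 y1 ym] lt[of xm x2 ym y2] assms(2,3)
    by (simp add: xm_def ym_def field_simps)
  finally show False by simp
qed


lemma goursat_ord:
  assumes U: "open U" and dg: "\<And>z. z \<in> U \<Longrightarrow> g field_differentiable (at z)"
    and o: "x1 \<le> x2" "y1 \<le> y2" and sub: "rect x1 x2 y1 y2 \<subseteq> U"
  shows "rint g x1 x2 y1 y2 = 0"
proof (rule ccontr)
  assume nz: "rint g x1 x2 y1 y2 \<noteq> 0"
  define N0 where "N0 = norm (rint g x1 x2 y1 y2)"
  have N0pos: "N0 > 0" using nz by (simp add: N0_def)
  have cont: "continuous_on U g"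
    using dg by (meson continuous_at_imp_continuous_on field_differentiable_imp_continuous_at)
  define Q where "Q = (\<lambda>r::real\<times>real\<times>real\<times>real. case r of (x1,x2,y1,y2) \<Rightarrow> x1 \<le> x2 \<and> y1 \<le> y2 \<and> rect x1 x2 y1 y2 \<subseteq> U)"
  have "\<forall>r. \<exists>r'. Q r \<longrightarrow> quadok g r r'"
    using quad_step[OF cont] unfolding Q_def by auto
  then obtain f where f: "\<And>r. Q r \<Longrightarrow> quadok g r (f r)" by metis
  define s where "s n = (f ^^ n) (x1, x2, y1, y2)" for n
  define a1 where "a1 n = fst (s n)" for n
  define a2 where "a2 n = fst (snd (s n))" for n
  define b1 where "b1 n = fst (snd (snd (s n)))" for n
  define b2 where "b2 n = snd (snd (snd (s n)))" for n
  have s_eq: "s n = (a1 n, a2 n, b1 n, b2 n)" for n by (simp add: a1_def a2_def b1_def b2_def)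
  have s_Suc: "s (Suc n) = f (s n)" for n by (simp add: s_def)
  have rect_mono: "rect a1' a2' b1' b2' \<subseteq> rect x1' x2' y1' y2'"
    if "x1' \<le> a1'" "a1' \<le> a2'" "a2' \<le> x2'" "y1' \<le> b1'" "b1' \<le> b2'" "b2' \<le> y2'" for a1' a2' b1' b2' x1' x2' y1' y2'
    using that by (auto simp: rect_def)
  have step: "Q (s n) \<Longrightarrow> Q (s (Suc n)) \<and> a1 n \<le> a1 (Suc n) \<and> a2 (Suc n) \<le> a2 n \<and> b1 n \<le> b1 (Suc n) \<and> b2 (Suc n) \<le> b2 n
     \<and> a2 (Suc n) - a1 (Suc n) = (a2 n - a1 n) / 2 \<and> b2 (Suc n) - b1 (Suc n) = (b2 n - b1 n) / 2
     \<and> norm (rint g (a1 (Suc n)) (a2 (Suc n)) (b1 (Suc n)) (b2 (Suc n))) \<ge> norm (rint g (a1 n) (a2 n) (b1 n) (b2 n)) / 4" for n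
  proof -
    assume q: "Q (s n)"
    have qo: "quadok g (s n) (s (Suc n))" using f[OF q] s_Suc by simp
    then have *: "a1 n \<le> a1 (Suc n) \<and> a1 (Suc n) \<le> a2 (Suc n) \<and> a2 (Suc n) \<le> a2 n \<and> b1 n \<le> b1 (Suc n) \<and> b1 (Suc n) \<le> b2 (Suc n) \<and> b2 (Suc n) \<le> b2 n
     \<and> a2 (Suc n) - a1 (Suc n) = (a2 n - a1 n) / 2 \<and> b2 (Suc n) - b1 (Suc n) = (b2 n - b1 n) / 2
     \<and> norm (rint g (a1 (Suc n)) (a2 (Suc n)) (b1 (Suc n)) (b2 (Suc n))) \<ge> norm (rint g (a1 n) (a2 n) (b1 n) (b2 n)) / 4"
      unfolding quadok_def s_eq by simp
    have "rect (a1 (Suc n)) (a2 (Suc n)) (b1 (Suc n)) (b2 (Suc n)) \<subseteq> rect (a1 n) (a2 n) (b1 n) (b2 n)"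
      by (rule rect_mono) (use * in auto)
    then have "Q (s (Suc n))" using q * unfolding Q_def s_eq by auto
    then show ?thesis using * by blast
  qed
  have inv: "Q (s n) \<and> a2 n - a1 n = (x2 - x1) / 2^n \<and> b2 n - b1 n = (y2 - y1) / 2^n
      \<and> norm (rint g (a1 n) (a2 n) (b1 n) (b2 n)) \<ge> N0 / 4^n" for n
  proof (induction n)
    case 0
    show ?case using o sub by (simp add: Q_def s_def a1_def a2_def b1_def b2_def N0_def)
  next
    case (Suc n)
    have st: "Q (s (Suc n))" "a2 (Suc n) - a1 (Suc n) = (a2 n - a1 n) / 2" "b2 (Suc n) - b1 (Suc n) = (b2 n - b1 n) / 2"
      "norm (rint g (a1 (Suc n)) (a2 (Suc n)) (b1 (Suc n)) (b2 (Suc n))) \<ge> norm (rint g (a1 n) (a2 n) (b1 n) (b2 n)) / 4"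
      using step[of n] Suc by auto
    have "N0 / 4^Suc n = (N0 / 4^n) / 4" by simp
    also have "\<dots> \<le> norm (rint g (a1 n) (a2 n) (b1 n) (b2 n)) / 4"
      using Suc by (intro divide_right_mono) auto
    finally have "N0 / 4^Suc n \<le> norm (rint g (a1 (Suc n)) (a2 (Suc n)) (b1 (Suc n)) (b2 (Suc n)))"
      using st(4) by linarith
    then show ?case using st Suc by simp
  qed
  define R where "R n = rect (a1 n) (a2 n) (b1 n) (b2 n)" for n
  have ord: "a1 n \<le> a2 n" "b1 n \<le> b2 n" for n
    using inv[of n] by (auto simp: Q_def s_eq)
  have RU: "R n \<subseteq> U" for n using inv[of n] by (auto simp: Q_def s_eq R_def)
  have Rdec: "R (Suc n) \<subseteq> R n" for n
    unfolding R_def by (rule rect_mono) (use step[of n] inv[of n] ord in auto)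
  have Rdec': "R n \<subseteq> R m" if "m \<le> n" for m n
    using Rdec that by (metis decseq_SucI decseqD)
  define d0 where "d0 = (x2 - x1) + (y2 - y1)"
  have d0: "d0 \<ge> 0" using o by (simp add: d0_def)
  have Rdist: "norm (z - w) \<le> d0 / 2^n" if "z \<in> R n" "w \<in> R n" for z w n
  proof -
    have "norm (z - w) \<le> \<bar>Re (z - w)\<bar> + \<bar>Im (z - w)\<bar>" by (rule cmod_le)
    also have "\<dots> \<le> (a2 n - a1 n) + (b2 n - b1 n)"
      using that ord[of n] by (auto simp: R_def rect_def)
    also have "\<dots> = d0 / 2^n" using inv[of n] by (simp add: d0_def add_divide_distrib)
    finally show ?thesis .
  qed
  have small: "\<exists>n. d0 / 2^n < e" if e0: "e > 0" for e
  proof -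
    obtain n where "(1/2::real)^n < e / (d0 + 1)"
      using real_arch_pow_inv[of "e / (d0 + 1)" "1/2"] e0 d0 by auto
    then have "d0 / 2^n < e"
      using d0 e0 by (simp add: field_simps power_divide)
    then show ?thesis by blast
  qed
  obtain p where p: "\<And>n. p \<in> R n"
  proof (rule decreasing_closed_nest[of R])
    show "closed (R n)" for n by (simp add: R_def rect_closed)
    show "R n \<noteq> {}" for n by (simp add: R_def rect_ne)
    show "R n \<subseteq> R m" if "m \<le> n" for m n using Rdec' that .
    show "\<exists>n. \<forall>x\<in>R n. \<forall>y\<in>R n. dist x y < e" if e0: "e > 0" for e
    proof -
      obtain n where "d0 / 2^n < e" using small[OF e0] by blast
      then show ?thesis using Rdist by (metis dist_norm le_less_trans)
    qed
  qed auto
  have pU: "p \<in> U" using p[of 0] RU by blast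
  then obtain g' where g': "(g has_field_derivative g') (at p)"
    using dg field_differentiable_def by blast
  then have loc: "\<forall>e>0. \<exists>d>0. \<forall>z. norm (z - p) < d \<longrightarrow> norm (g z - g p - g' * (z - p)) \<le> e * norm (z - p)"
    unfolding has_field_derivative_def has_derivative_at_alt by (simp add: mult.commute)
  define e where "e = N0 / (4 * (d0^2 + 1))"
  have epos: "e > 0" unfolding e_def using N0pos d0 by (intro divide_pos_pos) (auto intro: add_nonneg_pos)
  obtain d where dpos: "d > 0" and dd: "\<And>z. norm (z - p) < d \<Longrightarrow> norm (g z - g p - g' * (z - p)) \<le> e * norm (z - p)"
    using loc epos by blast
  obtain n where nd: "d0 / 2^n < d" using small[OF dpos] by blast
  let ?A = "\<lambda>z. g p + g' * (z - p)"
  have contR: "continuous_on (R n) g" using cont RU continuous_on_subset by blast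
  have contA: "continuous_on (R n) ?A" by (intro continuous_intros)
  have rA: "rint ?A (a1 n) (a2 n) (b1 n) (b2 n) = 0"
    by (rule rint_primitive[where G = "\<lambda>z. g p * z + g' * (z - p)^2 / 2"])
       (auto intro!: derivative_eq_intros simp: field_simps power2_eq_square)
  have "rint g (a1 n) (a2 n) (b1 n) (b2 n) = rint (\<lambda>z. g z - ?A z) (a1 n) (a2 n) (b1 n) (b2 n)"
    using rint_diff[of "a1 n" "a2 n" "b1 n" "b2 n" g ?A] contR contA rA by (simp add: R_def)
  also have "norm \<dots> \<le> (e * (d0 / 2^n)) * (2 * \<bar>a2 n - a1 n\<bar> + 2 * \<bar>b2 n - b1 n\<bar>)"
  proof (rule rint_bound)
    show "continuous_on (rect (a1 n) (a2 n) (b1 n) (b2 n)) (\<lambda>z. g z - ?A z)"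
      using contR contA by (simp add: R_def continuous_on_diff)
    fix z assume z: "z \<in> rect (a1 n) (a2 n) (b1 n) (b2 n)"
    have zp: "norm (z - p) \<le> d0 / 2^n" using Rdist[of z n p] z p[of n] by (simp add: R_def)
    then have "norm (g z - ?A z) \<le> e * norm (z - p)" using dd[of z] nd by (simp add: algebra_simps)
    also have "\<dots> \<le> e * (d0 / 2^n)" using mult_left_mono[OF zp, of e] epos by simp
    finally show "norm (g z - ?A z) \<le> e * (d0 / 2^n)" .
  qed
  also have "\<dots> = 2 * e * d0^2 / 4^n"
  proof -
    have w: "2 * \<bar>a2 n - a1 n\<bar> + 2 * \<bar>b2 n - b1 n\<bar> = 2 * d0 / 2^n"
      using inv[of n] ord[of n] o by (simp add: d0_def add_divide_distrib)
    have f: "(4::real)^n = 2^n * 2^n" by (simp add: power_mult_distrib[symmetric])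
    show ?thesis unfolding w f by (simp add: power2_eq_square)
  qed
  finally have "N0 / 4^n \<le> 2 * e * d0^2 / 4^n" using inv[of n] by simp
  then have "N0 \<le> 2 * e * d0^2" by (simp add: divide_right_mono_neg field_simps)
  also have "\<dots> < N0"
  proof -
    have "N0 * (2 * d0^2) < N0 * (4 * (d0^2 + 1))"
      using N0pos by (intro mult_strict_left_mono) (auto simp: algebra_simps add_pos_nonneg)
    moreover have den: "4 * (d0^2 + 1) > (0::real)" by (simp add: add_nonneg_pos)
    moreover have "2 * e * d0^2 = N0 * (2 * d0^2) / (4 * (d0^2 + 1))" by (simp add: e_def)
    ultimately show ?thesis by (simp add: divide_less_eq)
  qed
  finally show False by simp
qed


lemma rint_swap_x: "rint g x2 x1 y1 y2 = - rint g x1 x2 y1 y2"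
  unfolding rint_def hl_def vl_def by (simp add: oint_swap[of _ x2 x1] algebra_simps)

lemma rint_swap_y: "rint g x1 x2 y2 y1 = - rint g x1 x2 y1 y2"
  unfolding rint_def hl_def vl_def by (simp add: oint_swap[of _ y2 y1] algebra_simps)

lemma rect_swap_x: "rect x2 x1 y1 y2 = rect x1 x2 y1 y2" by (auto simp: rect_def)
lemma rect_swap_y: "rect x1 x2 y2 y1 = rect x1 x2 y1 y2" by (auto simp: rect_def)

lemma rint_zero_any:
  assumes "\<And>x1 x2 y1 y2. x1 \<le> x2 \<Longrightarrow> y1 \<le> y2 \<Longrightarrow> rect x1 x2 y1 y2 \<subseteq> U \<Longrightarrow> rint g x1 x2 y1 y2 = 0"
    and "rect x1 x2 y1 y2 \<subseteq> U"
  shows "rint g x1 x2 y1 y2 = 0"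
proof (cases "x1 \<le> x2")
  case True
  then show ?thesis
  proof (cases "y1 \<le> y2")
    case True then show ?thesis using assms \<open>x1 \<le> x2\<close> by blast
  next
    case False
    then show ?thesis using assms(1)[of x1 x2 y2 y1] assms(2) \<open>x1 \<le> x2\<close>
      rint_swap_y[of g x1 x2 y2 y1] rect_swap_y[of x1 x2 y2 y1] by simp
  qed
next
  case False
  then show ?thesis
  proof (cases "y1 \<le> y2")
    case True then show ?thesis using assms(1)[of x2 x1 y1 y2] assms(2) False
      rint_swap_x[of g x2 x1 y1 y2] rect_swap_x[of x2 x1 y1 y2] by simp
  next
    case F2: False
    then show ?thesis using assms(1)[of x2 x1 y2 y1] assms(2) False
      rint_swap_x[of g x2 x1 y2 y1] rect_swap_x[of x2 x1 y2 y1]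
      rint_swap_y[of g x1 x2 y2 y1] rect_swap_y[of x1 x2 y2 y1]
      rint_swap_y[of g x2 x1 y2 y1] rect_swap_y[of x2 x1 y2 y1] by simp
  qed
qed

lemma rect_bounded: "bounded (rect x1 x2 y1 y2)"
proof -
  have "rect x1 x2 y1 y2 \<subseteq> cball 0 (\<bar>x1\<bar> + \<bar>x2\<bar> + \<bar>y1\<bar> + \<bar>y2\<bar>)"
  proof
    fix z assume z: "z \<in> rect x1 x2 y1 y2"
    have "norm z \<le> \<bar>Re z\<bar> + \<bar>Im z\<bar>" by (rule cmod_le)
    also have "\<dots> \<le> \<bar>x1\<bar> + \<bar>x2\<bar> + \<bar>y1\<bar> + \<bar>y2\<bar>" using z unfolding rect_def by simp (smt (verit))
    finally show "z \<in> cball 0 (\<bar>x1\<bar> + \<bar>x2\<bar> + \<bar>y1\<bar> + \<bar>y2\<bar>)" by simp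
  qed
  then show ?thesis using bounded_subset by blast
qed

lemma rect_compact: "compact (rect x1 x2 y1 y2)"
  using rect_bounded rect_closed by (simp add: compact_eq_bounded_closed)

lemma goursat_exc_ord:
  assumes U: "open U" and cg: "continuous_on U g"
    and dg: "\<And>z. z \<in> U - {z0} \<Longrightarrow> g field_differentiable (at z)"
    and o: "x1 \<le> x2" "y1 \<le> y2" and sub: "rect x1 x2 y1 y2 \<subseteq> U"
  shows "rint g x1 x2 y1 y2 = 0"
proof -
  have avoid: "rint g a1 a2 b1 b2 = 0"
    if "a1 \<le> a2" "b1 \<le> b2" "rect a1 a2 b1 b2 \<subseteq> U" "z0 \<notin> rect a1 a2 b1 b2" for a1 a2 b1 b2
    by (rule goursat_ord[of "U - {z0}"]) (use that U dg in auto)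
  show ?thesis
  proof (cases "z0 \<in> rect x1 x2 y1 y2")
    case False
    then show ?thesis using avoid o sub by blast
  next
    case True
    define x0 where "x0 = Re z0"
    define y0 where "y0 = Im z0"
    have x0: "x1 \<le> x0" "x0 \<le> x2" and y0: "y1 \<le> y0" "y0 \<le> y2"
      using True o by (auto simp: rect_def x0_def y0_def)
    obtain B where B: "\<And>z. z \<in> rect x1 x2 y1 y2 \<Longrightarrow> norm (g z) \<le> B"
    proof -
      have "compact (g ` rect x1 x2 y1 y2)"
        by (rule compact_continuous_image[OF continuous_on_subset[OF cg sub] rect_compact])
      then obtain B where "\<forall>x\<in>g ` rect x1 x2 y1 y2. norm x \<le> B"
        using compact_imp_bounded bounded_iff by metis
      then show ?thesis using that by auto
    qed
    have inU: "Complex x y \<in> U" if "x \<in> {x1..x2}" "y \<in> {y1..y2}" for x y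
      using sub that by (auto simp: rect_def)
    have bnd: "norm (rint g x1 x2 y1 y2) \<le> B * (8 * d)" if dpos: "d > 0" for d
    proof -
      define a where "a = max x1 (x0 - d)"
      define b where "b = min x2 (x0 + d)"
      define c where "c = max y1 (y0 - d)"
      define e where "e = min y2 (y0 + d)"
      have ab: "x1 \<le> a" "a \<le> x0" "x0 \<le> b" "b \<le> x2" and ce: "y1 \<le> c" "c \<le> y0" "y0 \<le> e" "e \<le> y2"
        using x0 y0 dpos by (auto simp: a_def b_def c_def e_def)
      have ab2: "a \<le> b" "c \<le> e" using ab ce by linarith+
      have s1: "rint g x1 x2 y1 y2 = rint g x1 a y1 y2 + rint g a x2 y1 y2"
        by (rule rint_split_x[OF cg], rule inU) (use ab o in auto)
      have s2: "rint g a x2 y1 y2 = rint g a b y1 y2 + rint g b x2 y1 y2"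
        by (rule rint_split_x[OF cg], rule inU) (use ab o in auto)
      have s3: "rint g a b y1 y2 = rint g a b y1 c + rint g a b c y2"
        by (rule rint_split_y[OF cg], rule inU) (use ab ce o in auto)
      have s4: "rint g a b c y2 = rint g a b c e + rint g a b e y2"
        by (rule rint_split_y[OF cg], rule inU) (use ab ce o in auto)
      have r1: "rint g x1 a y1 y2 = 0"
      proof (cases "a = x1")
        case True then show ?thesis by (simp add: rint_degenerate_x)
      next
        case False
        then have "a = x0 - d" by (simp add: a_def max_def split: if_splits)
        then have "z0 \<notin> rect x1 a y1 y2" using dpos ab by (simp add: rect_def x0_def)
        moreover have "rect x1 a y1 y2 \<subseteq> U" using sub ab o by (force simp: rect_def)
        ultimately show ?thesis using avoid[of x1 a y1 y2] ab ce o ab2 by blast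
      qed
      have r2: "rint g b x2 y1 y2 = 0"
      proof (cases "b = x2")
        case True then show ?thesis by (simp add: rint_degenerate_x)
      next
        case False
        then have "b = x0 + d" by (simp add: b_def min_def split: if_splits)
        then have "z0 \<notin> rect b x2 y1 y2" using dpos ab by (simp add: rect_def x0_def)
        moreover have "rect b x2 y1 y2 \<subseteq> U" using sub ab o by (force simp: rect_def)
        ultimately show ?thesis using avoid[of b x2 y1 y2] ab ce o ab2 by blast
      qed
      have r3: "rint g a b y1 c = 0"
      proof (cases "c = y1")
        case True then show ?thesis by (simp add: rint_degenerate_y)
      next
        case False
        then have "c = y0 - d" by (simp add: c_def max_def split: if_splits)
        then have "z0 \<notin> rect a b y1 c" using dpos ce by (simp add: rect_def y0_def)
        moreover have "rect a b y1 c \<subseteq> U" using sub ab ce o by (force simp: rect_def)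
        ultimately show ?thesis using avoid[of a b y1 c] ab ce o ab2 by blast
      qed
      have r4: "rint g a b e y2 = 0"
      proof (cases "e = y2")
        case True then show ?thesis by (simp add: rint_degenerate_y)
      next
        case False
        then have "e = y0 + d" by (simp add: e_def min_def split: if_splits)
        then have "z0 \<notin> rect a b e y2" using dpos ce by (simp add: rect_def y0_def)
        moreover have "rect a b e y2 \<subseteq> U" using sub ab ce o by (force simp: rect_def)
        ultimately show ?thesis using avoid[of a b e y2] ab ce o ab2 by blast
      qed
      have "rint g x1 x2 y1 y2 = rint g a b c e" using s1 s2 s3 s4 r1 r2 r3 r4 by simp
      also have "norm \<dots> \<le> B * (2 * \<bar>b - a\<bar> + 2 * \<bar>e - c\<bar>)"
        by (rule rint_bound, rule continuous_on_subset[OF cg], use sub ab ce in \<open>force simp: rect_def\<close>,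
            rule B) (use ab ce in \<open>auto simp: rect_def\<close>)
      also have "\<dots> \<le> B * (8 * d)"
      proof -
        have B0: "B \<ge> 0" using B[of z0] True by (meson norm_ge_zero order_trans)
        have "b \<le> x0 + d" "a \<ge> x0 - d" "e \<le> y0 + d" "c \<ge> y0 - d"
          by (simp_all add: a_def b_def c_def e_def)
        then have "2 * \<bar>b - a\<bar> + 2 * \<bar>e - c\<bar> \<le> 8 * d"
          using ab ce by (simp add: abs_of_nonneg)
        then show ?thesis using B0 by (simp add: mult_left_mono)
      qed
      finally show ?thesis .
    qed
    show ?thesis
    proof (rule ccontr)
      assume nz: "rint g x1 x2 y1 y2 \<noteq> 0"
      define N where "N = norm (rint g x1 x2 y1 y2)"
      have N0: "N > 0" using nz by (simp add: N_def)
      have "N \<le> B * (8 * 1)" using bnd[of 1] by (simp add: N_def)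
      then have B0: "B > 0" using N0 by linarith
      define d where "d = N / (16 * B)"
      have dpos: "d > 0" using N0 B0 by (simp add: d_def)
      have e: "B * (8 * d) = N / 2" using B0 by (simp add: d_def field_simps)
      have "N \<le> B * (8 * d)" using bnd[OF dpos] unfolding N_def .
      then have "N \<le> N / 2" using e by simp
      then show False using N0 by linarith
    qed
  qed
qed

lemma goursat_exc:
  assumes "open U" "continuous_on U g"
    "\<And>z. z \<in> U - {z0} \<Longrightarrow> g field_differentiable (at z)"
    "rect x1 x2 y1 y2 \<subseteq> U"
  shows "rint g x1 x2 y1 y2 = 0"
  by (rule rint_zero_any[where U = U], rule goursat_exc_ord[OF assms(1-3)]) (use assms in auto)


definition sq :: "complex \<Rightarrow> real \<Rightarrow> complex set" where
  "sq c s = {z. \<bar>Re z - Re c\<bar> < s \<and> \<bar>Im z - Im c\<bar> < s}"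

lemma open_sq: "open (sq c s)"
proof -
  have "sq c s = {z. Re z - Re c < s} \<inter> {z. Re c - Re z < s} \<inter> {z. Im z - Im c < s} \<inter> {z. Im c - Im z < s}"
    by (auto simp: sq_def abs_less_iff)
  then show ?thesis by (auto intro!: open_Int open_Collect_less continuous_intros)
qed

lemma oint_const: "oint (\<lambda>_. k) a b = of_real (b - a) * k"
  by (auto simp: oint_def scaleR_conv_of_real algebra_simps)

lemma hl_combine:
  assumes "continuous_on U g" "\<And>x. x \<in> {min a (min b c)..max a (max b c)} \<Longrightarrow> Complex x y \<in> U"
  shows "hl g y a b + hl g y b c = hl g y a c"
  unfolding hl_def by (rule oint_combine, rule cont_hline[OF assms])

lemma vl_combine:
  assumes "continuous_on U g" "\<And>y. y \<in> {min a (min b c)..max a (max b c)} \<Longrightarrow> Complex x y \<in> U"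
  shows "vl g x a b + vl g x b c = vl g x a c"
proof -
  have "oint (\<lambda>y. g (Complex x y)) a b + oint (\<lambda>y. g (Complex x y)) b c = oint (\<lambda>y. g (Complex x y)) a c"
    by (rule oint_combine, rule cont_vline[OF assms])
  then show ?thesis unfolding vl_def by (metis distrib_left)
qed

lemma primitive_sq:
  assumes cg: "continuous_on U g" and sqU: "sq c s \<subseteq> U"
    and R0: "\<And>x1 x2 y1 y2. rect x1 x2 y1 y2 \<subseteq> U \<Longrightarrow> rint g x1 x2 y1 y2 = 0"
  shows "\<exists>G. \<forall>z\<in>sq c s. (G has_field_derivative g z) (at z)"
proof -
  define G where "G z = hl g (Im c) (Re c) (Re z) + vl g (Re z) (Im c) (Im z)" for z
  have inQ: "Complex x y \<in> sq c s" if "\<bar>x - Re c\<bar> < s" "\<bar>y - Im c\<bar> < s" for x y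
    using that by (simp add: sq_def)
  have betw: "\<bar>t - m\<bar> < s" if "t \<in> {min a (min b d)..max a (max b d)}" "\<bar>a - m\<bar> < s" "\<bar>b - m\<bar> < s" "\<bar>d - m\<bar> < s" for t a b d m :: real
    using that by (auto simp: abs_less_iff)
  have key: "G w - G z = hl g (Im z) (Re z) (Re w) + vl g (Re w) (Im z) (Im w)"
    if z: "z \<in> sq c s" and w: "w \<in> sq c s" for z w
  proof -
    have zr: "\<bar>Re z - Re c\<bar> < s" "\<bar>Im z - Im c\<bar> < s" and wr: "\<bar>Re w - Re c\<bar> < s" "\<bar>Im w - Im c\<bar> < s"
      using z w by (auto simp: sq_def)
    have s0: "s > 0" using zr by linarith
    have inU: "Complex x y \<in> U" if "\<bar>x - Re c\<bar> < s" "\<bar>y - Im c\<bar> < s" for x y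
      using sqU that by (auto simp: sq_def)
    have h1: "hl g (Im c) (Re c) (Re z) + hl g (Im c) (Re z) (Re w) = hl g (Im c) (Re c) (Re w)"
      by (rule hl_combine[OF cg], rule inU) (auto intro: betw[of _ "Re c" "Re z" "Re w"] simp: zr wr s0)
    have v1: "vl g (Re w) (Im c) (Im z) + vl g (Re w) (Im z) (Im w) = vl g (Re w) (Im c) (Im w)"
      by (rule vl_combine[OF cg], rule inU) (auto intro: betw[of _ "Im c" "Im z" "Im w"] simp: zr wr s0)
    have "rect (Re z) (Re w) (Im c) (Im z) \<subseteq> U"
    proof
      fix q assume "q \<in> rect (Re z) (Re w) (Im c) (Im z)"
      then have "\<bar>Re q - Re c\<bar> < s" "\<bar>Im q - Im c\<bar> < s"
        using zr wr s0 by (auto simp: rect_def abs_less_iff)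
      then show "q \<in> U" using sqU by (auto simp: sq_def)
    qed
    then have r: "rint g (Re z) (Re w) (Im c) (Im z) = 0" by (rule R0)
    have rA: "hl g (Im c) (Re z) (Re w) = hl g (Im z) (Re z) (Re w) + vl g (Re z) (Im c) (Im z) - vl g (Re w) (Im c) (Im z)"
      using r unfolding rint_def by (simp add: algebra_simps eq_diff_eq diff_eq_eq)
    show ?thesis unfolding G_def h1[symmetric] v1[symmetric] rA by (simp add: algebra_simps)
  qed
  show ?thesis
  proof (intro exI ballI)
    fix z assume z: "z \<in> sq c s"
    have cz: "continuous (at z) g"
      by (rule continuous_on_interior[OF cg]) (use z sqU open_sq interior_maximal in blast)
    show "(G has_field_derivative g z) (at z)"
      unfolding has_field_derivative_def has_derivative_at_alt
    proof (intro conjI allI impI)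
      show "bounded_linear ((*) (g z))" by (rule bounded_linear_mult_right)
      fix e :: real assume e: "e > 0"
      obtain d1 where d1: "d1 > 0" "\<And>y. dist y z < d1 \<Longrightarrow> dist (g y) (g z) < e / 2"
        using cz e unfolding continuous_at_eps_delta by (metis half_gt_zero)
      obtain d2 where d2: "d2 > 0" "ball z d2 \<subseteq> sq c s"
        using open_sq z by (meson openE)
      define d where "d = min (d1 / 2) d2"
      have d: "d > 0" using d1 d2 by (simp add: d_def)
      show "\<exists>d>0. \<forall>w. norm (w - z) < d \<longrightarrow> norm (G w - G z - g z * (w - z)) \<le> e * norm (w - z)"
      proof (intro exI conjI allI impI)
        show "d > 0" by (rule d)
        fix w assume wz: "norm (w - z) < d"
        have w: "w \<in> sq c s" using wz d2 by (auto simp: d_def dist_norm norm_minus_commute)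
        have zU: "Complex x (Im z) \<in> U" if "x \<in> {min (Re z) (Re w)..max (Re z) (Re w)}" for x
        proof -
          have "\<bar>x - Re c\<bar> < s"
            using that z w by (auto simp: sq_def abs_less_iff)
          then show ?thesis using z sqU by (auto simp: sq_def)
        qed
        have wU: "Complex (Re w) y \<in> U" if "y \<in> {min (Im z) (Im w)..max (Im z) (Im w)}" for y
        proof -
          have "\<bar>y - Im c\<bar> < s"
            using that z w by (auto simp: sq_def abs_less_iff)
          then show ?thesis using w sqU by (auto simp: sq_def)
        qed
        have cH: "continuous_on {min (Re z) (Re w)..max (Re z) (Re w)} (\<lambda>x. g (Complex x (Im z)))"
          by (rule cont_hline[OF cg zU])
        have cV: "continuous_on {min (Im z) (Im w)..max (Im z) (Im w)} (\<lambda>y. g (Complex (Re w) y))"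
          by (rule cont_vline[OF cg wU])
        have wd1: "norm (w - z) * 2 < d1" using wz by (simp add: d_def)
        have reb: "\<bar>Re w - Re z\<bar> \<le> norm (w - z)" "\<bar>Im w - Im z\<bar> \<le> norm (w - z)"
          using abs_Re_le_cmod[of "w - z"] abs_Im_le_cmod[of "w - z"] by auto
        have E1: "norm (hl g (Im z) (Re z) (Re w) - g z * of_real (Re w - Re z)) \<le> e / 2 * \<bar>Re w - Re z\<bar>"
        proof -
          have "hl g (Im z) (Re z) (Re w) - g z * of_real (Re w - Re z) = oint (\<lambda>x. g (Complex x (Im z)) - g z) (Re z) (Re w)"
            unfolding hl_def by (subst oint_diff[OF cH]) (auto simp: oint_const mult.commute)
          also have "norm \<dots> \<le> e / 2 * \<bar>Re w - Re z\<bar>"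
          proof (rule oint_bound)
            show "continuous_on {min (Re z) (Re w)..max (Re z) (Re w)} (\<lambda>x. g (Complex x (Im z)) - g z)"
              by (intro continuous_intros cH)
            fix x assume x: "x \<in> {min (Re z) (Re w)..max (Re z) (Re w)}"
            have "dist (Complex x (Im z)) z = \<bar>x - Re z\<bar>"
              by (simp add: dist_norm cmod_def complex_eq_iff)
            also have "\<dots> \<le> \<bar>Re w - Re z\<bar>" using x by (auto simp: abs_le_iff)
            also have "\<dots> < d1" using reb wd1 norm_ge_zero[of "w - z"] by linarith
            finally show "norm (g (Complex x (Im z)) - g z) \<le> e / 2"
              using d1(2) by (simp add: dist_norm less_imp_le)
          qed
          finally show ?thesis .
        qed
        have E2: "norm (vl g (Re w) (Im z) (Im w) - \<i> * g z * of_real (Im w - Im z)) \<le> e / 2 * \<bar>Im w - Im z\<bar>"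
        proof -
          have "vl g (Re w) (Im z) (Im w) - \<i> * g z * of_real (Im w - Im z) = \<i> * oint (\<lambda>y. g (Complex (Re w) y) - g z) (Im z) (Im w)"
            unfolding vl_def by (subst oint_diff[OF cV]) (auto simp: oint_const algebra_simps)
          also have "norm \<dots> \<le> e / 2 * \<bar>Im w - Im z\<bar>"
            unfolding norm_mult norm_ii mult_1
          proof (rule oint_bound)
            show "continuous_on {min (Im z) (Im w)..max (Im z) (Im w)} (\<lambda>y. g (Complex (Re w) y) - g z)"
              by (intro continuous_intros cV)
            fix y assume y: "y \<in> {min (Im z) (Im w)..max (Im z) (Im w)}"
            have "dist (Complex (Re w) y) z \<le> \<bar>Re w - Re z\<bar> + \<bar>y - Im z\<bar>"
              using cmod_le[of "Complex (Re w) y - z"] by (simp add: dist_norm)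
            also have "\<dots> \<le> \<bar>Re w - Re z\<bar> + \<bar>Im w - Im z\<bar>" using y by (auto simp: abs_le_iff)
            also have "\<dots> < d1" using reb wd1 norm_ge_zero[of "w - z"] by linarith
            finally show "norm (g (Complex (Re w) y) - g z) \<le> e / 2"
              using d1(2) by (simp add: dist_norm less_imp_le)
          qed
          finally show ?thesis .
        qed
        have wz_eq: "w - z = of_real (Re w - Re z) + \<i> * of_real (Im w - Im z)"
          by (simp add: complex_eq_iff)
        have "G w - G z - g z * (w - z) = (hl g (Im z) (Re z) (Re w) - g z * of_real (Re w - Re z))
            + (vl g (Re w) (Im z) (Im w) - \<i> * g z * of_real (Im w - Im z))"
          unfolding key[OF z w] wz_eq by (simp add: algebra_simps)
        also have "norm \<dots> \<le> e / 2 * \<bar>Re w - Re z\<bar> + e / 2 * \<bar>Im w - Im z\<bar>"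
          using E1 E2 norm_triangle_ineq by (smt (verit))
        also have "\<dots> \<le> e / 2 * norm (w - z) + e / 2 * norm (w - z)"
          using reb e by (intro add_mono mult_left_mono) auto
        finally show "norm (G w - G z - g z * (w - z)) \<le> e * norm (w - z)" by simp
      qed
    qed
  qed
qed


lemma circ_in_sq:
  assumes "0 < r" "r < s"
  shows "c + of_real r * exp (\<i> * of_real t) \<in> sq c s"
proof -
  have n: "norm (of_real r * exp (\<i> * of_real t)) = r" using assms by (simp add: norm_mult)
  have "\<bar>Re (of_real r * exp (\<i> * of_real t))\<bar> \<le> r" "\<bar>Im (of_real r * exp (\<i> * of_real t))\<bar> \<le> r"
    using abs_Re_le_cmod abs_Im_le_cmod n by metis+
  then show ?thesis using assms by (simp add: sq_def)
qed

lemma circle_zero: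
  assumes G: "\<And>z. z \<in> sq c s \<Longrightarrow> (G has_field_derivative g z) (at z)" and r: "0 < r" "r < s"
  shows "((\<lambda>t. g (c + of_real r * exp (\<i> * of_real t)) * (\<i> * of_real r * exp (\<i> * of_real t))) has_integral 0) {0..2*pi}"
proof -
  define Gam where "Gam \<zeta> = c + of_real r * exp (\<i> * \<zeta>)" for \<zeta>
  have dGam: "(Gam has_field_derivative (\<i> * of_real r * exp (\<i> * \<zeta>))) (at \<zeta>)" for \<zeta>
    unfolding Gam_def by (auto intro!: derivative_eq_intros)
  have d: "((\<lambda>t. G (Gam (of_real t))) has_vector_derivative
      (g (c + of_real r * exp (\<i> * of_real t)) * (\<i> * of_real r * exp (\<i> * of_real t)))) (at t within {0..2*pi})" for t
  proof -
    have "((G \<circ> Gam) has_field_derivative g (Gam (of_real t)) * (\<i> * of_real r * exp (\<i> * of_real t))) (at (of_real t))"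
      by (rule DERIV_chain[OF G dGam]) (simp add: Gam_def circ_in_sq r)
    then show ?thesis using has_vector_derivative_real_field by (fastforce simp: o_def Gam_def)
  qed
  have "((\<lambda>t. g (c + of_real r * exp (\<i> * of_real t)) * (\<i> * of_real r * exp (\<i> * of_real t))) has_integral
      (G (Gam (of_real (2*pi))) - G (Gam (of_real 0)))) {0..2*pi}"
    by (rule fundamental_theorem_of_calculus) (use d in auto)
  moreover have "Gam (of_real (2*pi)) = Gam (of_real 0)"
    unfolding Gam_def by (simp add: mult.commute)
  ultimately show ?thesis by simp
qed

lemma mean_value:
  assumes U: "open U" and dF: "\<And>z. z \<in> U \<Longrightarrow> F field_differentiable (at z)"
    and ball: "ball c R \<subseteq> U" and r: "0 < r" "r < R / 2"
  shows "((\<lambda>t. F (c + of_real r * exp (\<i> * of_real t))) has_integral (of_real (2*pi) * F c)) {0..2*pi}"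
proof -
  define g where "g z = (if z = c then deriv F c else (F z - F c) / (z - c))" for z
  have "R > 0" using r by linarith
  then have cU: "c \<in> U" using ball by auto
  obtain D where D: "(F has_field_derivative D) (at c)" using dF[OF cU] field_differentiable_def by blast
  have gd: "g field_differentiable (at z)" if z: "z \<in> U" "z \<noteq> c" for z
  proof -
    obtain DF where DF: "(F has_field_derivative DF) (at z)" using dF[OF z(1)] field_differentiable_def by blast
    have "((\<lambda>y. (F y - F c) / (y - c)) has_field_derivative ((DF - 0) * (z - c) - (F z - F c) * (1 - 0)) / ((z - c) * (z - c))) (at z)"
      by (rule DERIV_divide, rule DERIV_diff[OF DF DERIV_const], rule DERIV_diff[OF DERIV_ident DERIV_const]) (use z in simp)
    then have "(g has_field_derivative ((DF - 0) * (z - c) - (F z - F c) * (1 - 0)) / ((z - c) * (z - c))) (at z)"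
      by (rule has_field_derivative_transform_within_open[where S = "- {c}"]) (use z in \<open>auto simp: g_def\<close>)
    then show ?thesis using field_differentiable_def by blast
  qed
  have gc: "continuous (at c) g"
  proof -
    have lim: "((\<lambda>y. (F y - F c) / (y - c)) \<longlongrightarrow> D) (at c)" using D has_field_derivative_iff by blast
    have gcD: "g c = D" using D by (simp add: g_def DERIV_imp_deriv)
    have "(g \<longlongrightarrow> D) (at c)"
      by (rule Lim_transform_within[OF lim, where d = 1]) (auto simp: g_def)
    then show ?thesis unfolding continuous_at gcD .
  qed
  have cg: "continuous_on (ball c R) g"
  proof (intro continuous_at_imp_continuous_on ballI)
    fix z assume z: "z \<in> ball c R"
    show "continuous (at z) g"
    proof (cases "z = c")
      case True then show ?thesis using gc by simp
    next
      case False
      then have "g field_differentiable (at z)" using gd z ball by blast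
      then show ?thesis by (rule field_differentiable_imp_continuous_at)
    qed
  qed
  have R0: "rint g x1 x2 y1 y2 = 0" if "rect x1 x2 y1 y2 \<subseteq> ball c R" for x1 x2 y1 y2
    by (rule goursat_exc[OF open_ball cg _ that, of c]) (use gd ball in auto)
  have sqb: "sq c (R/2) \<subseteq> ball c R"
  proof
    fix z assume "z \<in> sq c (R/2)"
    then have "\<bar>Re (z - c)\<bar> < R/2" "\<bar>Im (z - c)\<bar> < R/2" by (auto simp: sq_def)
    moreover have "norm (z - c) \<le> \<bar>Re (z - c)\<bar> + \<bar>Im (z - c)\<bar>" by (rule cmod_le)
    ultimately show "z \<in> ball c R" by (simp add: dist_norm norm_minus_commute)
  qed
  obtain G where G: "\<And>z. z \<in> sq c (R/2) \<Longrightarrow> (G has_field_derivative g z) (at z)"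
    using primitive_sq[OF cg sqb R0] by blast
  have I0: "((\<lambda>t. g (c + of_real r * exp (\<i> * of_real t)) * (\<i> * of_real r * exp (\<i> * of_real t))) has_integral 0) {0..2*pi}"
    by (rule circle_zero[OF G r])
  have eqf: "g (c + of_real r * exp (\<i> * of_real t)) * (\<i> * of_real r * exp (\<i> * of_real t))
      = \<i> * (F (c + of_real r * exp (\<i> * of_real t)) - F c)" for t
    using r by (simp add: g_def)
  have "((\<lambda>t. - \<i> * (\<i> * (F (c + of_real r * exp (\<i> * of_real t)) - F c))) has_integral (- \<i> * 0)) {0..2*pi}"
    by (rule has_integral_mult_right) (use I0 eqf in simp)
  then have I1: "((\<lambda>t. F (c + of_real r * exp (\<i> * of_real t)) - F c) has_integral 0) {0..2*pi}"
    by simp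
  have I2: "((\<lambda>t. F c) has_integral (of_real (2*pi) * F c)) {0..2*pi}"
    using has_integral_const_real[of "F c" 0 "2*pi"] by (simp add: scaleR_conv_of_real)
  show ?thesis using has_integral_add[OF I1 I2] by simp
qed


lemma max_principle:
  fixes h :: "complex \<Rightarrow> complex" and D :: "complex set"
  assumes D: "open D" "bounded D" and ch: "continuous_on (closure D) h"
    and dh: "\<And>z. z \<in> D \<Longrightarrow> h field_differentiable (at z)"
    and fr: "\<And>w. w \<in> frontier D \<Longrightarrow> norm (h w) \<le> m"
    and z: "z \<in> D"
  shows "norm (h z) \<le> m"
proof -
  have cpt: "compact (closure D)" using D(2) by (simp add: compact_eq_bounded_closed bounded_closure)
  have ne: "closure D \<noteq> {}" using z closure_subset by blast
  have cn: "continuous_on (closure D) (\<lambda>z. norm (h z))" by (intro continuous_intros ch)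
  obtain zm where zm: "zm \<in> closure D" "\<And>y. y \<in> closure D \<Longrightarrow> norm (h y) \<le> norm (h zm)"
    using continuous_attains_sup[OF cpt ne cn] by blast
  define M where "M = norm (h zm)"
  define K where "K = {y \<in> closure D. norm (h y) = M}"
  have Kc: "compact K"
  proof -
    have "closed K" unfolding K_def
      using continuous_closed_preimage_constant[OF cn closed_closure] by (simp add: M_def)
    moreover have "K \<subseteq> closure D" by (auto simp: K_def)
    ultimately show ?thesis using cpt compact_Int_closed[OF cpt, of K] by (simp add: Int_absorb1)
  qed
  have Kne: "K \<noteq> {}" using zm by (auto simp: K_def M_def)
  obtain z2 where z2: "z2 \<in> K" "\<And>y. y \<in> K \<Longrightarrow> Re y \<le> Re z2"
  proof -
    have "continuous_on K Re" by (intro continuous_intros)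
    then show ?thesis using continuous_attains_sup[OF Kc Kne, of Re] that by blast
  qed
  have "z2 \<in> frontier D"
  proof (rule ccontr)
    assume nf: "z2 \<notin> frontier D"
    have z2D: "z2 \<in> D" using nf z2(1) D(1) by (auto simp: K_def frontier_def interior_open)
    obtain R where R: "R > 0" "ball z2 R \<subseteq> D" using D(1) z2D openE by blast
    define r where "r = R / 4"
    have r: "0 < r" "r < R / 2" using R by (auto simp: r_def)
    define \<gamma> where "\<gamma> t = z2 + of_real r * exp (\<i> * of_real t)" for t
    have \<gamma>D: "\<gamma> t \<in> D" for t
    proof -
      have "dist z2 (\<gamma> t) = r" using r by (simp add: \<gamma>_def dist_norm norm_mult)
      then have "dist z2 (\<gamma> t) < R" using r by linarith
      then show ?thesis using R(2) by auto
    qed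
    have MV: "((\<lambda>t. h (\<gamma> t)) has_integral (of_real (2*pi) * h z2)) {0..2*pi}"
      unfolding \<gamma>_def by (rule mean_value[OF D(1) dh R(2) r])
    have cg: "continuous_on {0..2*pi} (\<lambda>t. h (\<gamma> t))"
      unfolding \<gamma>_def
      by (rule continuous_on_compose2[OF ch]) (use \<gamma>D closure_subset in \<open>auto intro!: continuous_intros simp: \<gamma>_def\<close>)
    have hz2: "norm (h z2) = M" using z2(1) by (simp add: K_def)
    have bound: "norm (h (\<gamma> t)) \<le> M" for t using zm(2)[of "\<gamma> t"] \<gamma>D closure_subset by (auto simp: M_def)
    have cn2: "continuous_on {0..2*pi} (\<lambda>t. norm (h (\<gamma> t)))" by (intro continuous_intros cg)
    have "2 * pi * M = norm (integral {0..2*pi} (\<lambda>t. h (\<gamma> t)))"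
      using integral_unique[OF MV] hz2 by (simp add: norm_mult)
    also have "\<dots> \<le> integral {0..2*pi} (\<lambda>t. norm (h (\<gamma> t)))"
      by (rule integral_norm_bound_integral) (auto intro: integrable_continuous_real cg cn2)
    finally have le: "2 * pi * M \<le> integral {0..2*pi} (\<lambda>t. norm (h (\<gamma> t)))" .
    define \<phi> where "\<phi> t = M - norm (h (\<gamma> t))" for t
    have int\<phi>: "integral {0..2*pi} \<phi> = 2 * pi * M - integral {0..2*pi} (\<lambda>t. norm (h (\<gamma> t)))"
      unfolding \<phi>_def by (subst integral_diff) (auto intro: integrable_continuous_real cn2)
    have \<phi>ge: "\<phi> t \<ge> 0" for t using bound[of t] by (simp add: \<phi>_def)
    have c\<phi>: "continuous_on {0..2*pi} \<phi>" unfolding \<phi>_def by (intro continuous_intros cg)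
    have "integral {0..2*pi} \<phi> \<ge> 0"
      by (rule integral_nonneg) (auto intro: integrable_continuous_real c\<phi> \<phi>ge)
    then have "integral {0..2*pi} \<phi> = 0" using int\<phi> le by linarith
    then have hint: "(\<phi> has_integral 0) (cbox 0 (2*pi))"
      using integrable_continuous_real[OF c\<phi>] by (metis box_real(2) has_integral_integrable_integral)
    have "\<phi> 0 = 0"
      using has_integral_0_cbox_imp_0[of 0 "2*pi" \<phi> 0] c\<phi> \<phi>ge hint pi_gt_zero by (simp add: not_le)
    then have "norm (h (\<gamma> 0)) = M" by (simp add: \<phi>_def)
    then have "\<gamma> 0 \<in> K" using \<gamma>D closure_subset by (auto simp: K_def)
    moreover have "Re (\<gamma> 0) > Re z2" using r by (simp add: \<gamma>_def)
    ultimately show False using z2(2) by fastforce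
  qed
  then have "M \<le> m" using fr z2(1) by (auto simp: K_def)
  moreover have "norm (h z) \<le> M" using zm(2)[of z] z closure_subset by (auto simp: M_def)
  ultimately show ?thesis by linarith
qed


definition S0 :: "real \<Rightarrow> complex set" where
  "S0 \<phi> = {rcis r \<theta> | r \<theta>. r > 0 \<and> \<bar>\<theta>\<bar> < \<phi> / 2}"
definition C0 :: "real \<Rightarrow> complex set" where
  "C0 \<phi> = {rcis r \<theta> | r \<theta>. r \<ge> 0 \<and> \<bar>\<theta>\<bar> \<le> \<phi> / 2}"

lemma rcis_not_nonpos:
  assumes "r > 0" "\<bar>\<theta>\<bar> < pi"
  shows "rcis r \<theta> \<notin> \<real>\<^sub>\<le>\<^sub>0"
proof
  assume a: "rcis r \<theta> \<in> \<real>\<^sub>\<le>\<^sub>0"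
  have nz: "rcis r \<theta> \<noteq> 0" using assms by (simp add: rcis_def)
  have gen: "Re w < 0 \<and> Im w = 0" if "w \<in> \<real>\<^sub>\<le>\<^sub>0" "w \<noteq> 0" for w :: complex
    using that by (auto simp: complex_nonpos_Reals_iff complex_eq_iff)
  have "Re (rcis r \<theta>) < 0 \<and> Im (rcis r \<theta>) = 0" by (rule gen[OF a nz])
  then have "Im (Ln (rcis r \<theta>)) = pi" using Im_Ln_eq_pi[OF nz] by simp
  moreover have "Ln (rcis r \<theta>) = Complex (ln r) \<theta>" using Ln_rcis[of r \<theta>] assms by (simp add: abs_less_iff)
  then have "Im (Ln (rcis r \<theta>)) = \<theta>" by simp
  ultimately show False using assms by simp
qed

lemma S0_Ln:
  assumes "0 < \<phi>" "\<phi> \<le> 2 * pi"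
  shows "S0 \<phi> = {z. z \<notin> \<real>\<^sub>\<le>\<^sub>0 \<and> \<bar>Im (Ln z)\<bar> < \<phi> / 2}"
proof safe
  fix z assume "z \<in> S0 \<phi>"
  then obtain r \<theta> where z: "z = rcis r \<theta>" "r > 0" "\<bar>\<theta>\<bar> < \<phi> / 2" by (auto simp: S0_def)
  then have t: "\<bar>\<theta>\<bar> < pi" using assms by linarith
  show "z \<in> \<real>\<^sub>\<le>\<^sub>0 \<Longrightarrow> False" using rcis_not_nonpos[OF z(2) t] z(1) by simp
  have "Ln (rcis r \<theta>) = Complex (ln r) \<theta>" using Ln_rcis[of r \<theta>] z t by (simp add: abs_less_iff)
  then show "\<bar>Im (Ln z)\<bar> < \<phi> / 2" using z by simp
next
  fix z assume z: "z \<notin> \<real>\<^sub>\<le>\<^sub>0" "\<bar>Im (Ln z)\<bar> < \<phi> / 2"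
  have nz: "z \<noteq> 0" using z by auto
  have "z = rcis (cmod z) (Arg z)" by (simp add: rcis_cmod_Arg)
  moreover have "Arg z = Im (Ln z)" using nz by (rule Arg_eq_Im_Ln)
  ultimately show "z \<in> S0 \<phi>" using z nz unfolding S0_def by force
qed

lemma open_S0:
  assumes "0 < \<phi>" "\<phi> \<le> 2 * pi"
  shows "open (S0 \<phi>)"
proof -
  have o1: "open (- \<real>\<^sub>\<le>\<^sub>0 :: complex set)" by (simp add: open_Compl)
  have c: "continuous_on (- \<real>\<^sub>\<le>\<^sub>0) (\<lambda>z. Im (Ln z))" by (intro continuous_intros) auto
  have "open ((- \<real>\<^sub>\<le>\<^sub>0) \<inter> (\<lambda>z. Im (Ln z)) -` {-\<phi>/2<..<\<phi>/2})"
    by (rule continuous_open_preimage[OF c o1]) simp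
  moreover have "(- \<real>\<^sub>\<le>\<^sub>0) \<inter> (\<lambda>z. Im (Ln z)) -` {-\<phi>/2<..<\<phi>/2} = S0 \<phi>"
    unfolding S0_Ln[OF assms] by (auto simp: abs_less_iff)
  ultimately show ?thesis by simp
qed

lemma closure_S0: "closure (S0 \<phi>) \<subseteq> C0 \<phi>"
proof
  fix z assume z: "z \<in> closure (S0 \<phi>)"
  define P where "P x = rcis (fst x) (snd x)" for x :: "real \<times> real"
  define K where "K = cbox (0::real, - \<phi> / 2) (norm z + 1, \<phi> / 2)"
  have cP: "continuous_on K P" unfolding P_def rcis_def cis_conv_exp by (intro continuous_intros)
  have cl: "closed (P ` K)"
    by (rule compact_imp_closed, rule compact_continuous_image[OF cP]) (simp add: K_def)
  have "z \<in> closure (S0 \<phi> \<inter> ball z 1)"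
    using open_Int_closure_subset[of "ball z 1" "S0 \<phi>"] z by (auto simp: Int_commute)
  moreover have "S0 \<phi> \<inter> ball z 1 \<subseteq> P ` K"
  proof
    fix w assume w: "w \<in> S0 \<phi> \<inter> ball z 1"
    then obtain r \<theta> where wr: "w = rcis r \<theta>" "r > 0" "\<bar>\<theta>\<bar> < \<phi> / 2" by (auto simp: S0_def)
    have "norm w < norm z + 1" using w norm_triangle_sub[of w z] by (auto simp: dist_norm norm_minus_commute)
    then have "r < norm z + 1" using wr by simp
    then have "(r, \<theta>) \<in> K" using wr by (auto simp: K_def cbox_Pair_iff abs_less_iff)
    then show "w \<in> P ` K" using wr by (force simp: P_def)
  qed
  ultimately have "z \<in> P ` K" using cl closure_minimal by blast
  then obtain r \<theta> where "(r, \<theta>) \<in> K" "z = rcis r \<theta>" by (auto simp: P_def)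
  then have "z = rcis r \<theta> \<and> r \<ge> 0 \<and> \<bar>\<theta>\<bar> \<le> \<phi> / 2" by (auto simp: K_def cbox_Pair_iff abs_le_iff)
  then show "z \<in> C0 \<phi>" unfolding C0_def by blast
qed


definition pw :: "real \<Rightarrow> complex \<Rightarrow> complex" where
  "pw \<beta> z = (if z = 0 then 0 else exp (of_real \<beta> * Ln z))"

lemma norm_pw: "norm (pw \<beta> z) = norm z powr \<beta>"
  by (simp add: pw_def powr_def)

lemma C0_cases:
  assumes "z \<in> C0 \<phi>" "\<phi> < 2 * pi"
  shows "z = 0 \<or> (\<exists>r \<theta>. r > 0 \<and> \<bar>\<theta>\<bar> \<le> \<phi> / 2 \<and> z = rcis r \<theta>)"
proof -
  obtain r \<theta> where r: "z = rcis r \<theta>" "r \<ge> 0" "\<bar>\<theta>\<bar> \<le> \<phi> / 2" using assms(1) unfolding C0_def by blast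
  show ?thesis
  proof (cases "r = 0")
    case True then show ?thesis using r by (simp add: rcis_def)
  next
    case False then show ?thesis using r by (intro disjI2 exI[of _ r] exI[of _ \<theta>]) auto
  qed
qed

lemma C0_not_nonpos:
  assumes "z \<in> C0 \<phi>" "\<phi> < 2 * pi" "z \<noteq> 0"
  shows "z \<notin> \<real>\<^sub>\<le>\<^sub>0"
proof -
  obtain r \<theta> where "r > 0" "\<bar>\<theta>\<bar> \<le> \<phi> / 2" "z = rcis r \<theta>" using C0_cases[OF assms(1,2)] assms(3) by blast
  moreover have "\<bar>\<theta>\<bar> < pi" using calculation assms(2) by linarith
  ultimately show ?thesis using rcis_not_nonpos by blast
qed

lemma Re_pw_ge:
  assumes z: "z \<in> C0 \<phi>" and \<phi>: "0 < \<phi>" "\<phi> < 2 * pi" and \<beta>: "0 < \<beta>" "\<beta> * \<phi> < pi"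
  shows "Re (pw \<beta> z) \<ge> cos (\<beta> * \<phi> / 2) * norm z powr \<beta>"
proof (cases "z = 0")
  case True then show ?thesis by (simp add: pw_def)
next
  case False
  then obtain r \<theta> where r: "r > 0" "\<bar>\<theta>\<bar> \<le> \<phi> / 2" "z = rcis r \<theta>" using C0_cases[OF z \<phi>(2)] by blast
  have t: "\<bar>\<theta>\<bar> < pi" using r \<phi> by linarith
  have L: "Ln z = Complex (ln r) \<theta>" using Ln_rcis[of r \<theta>] r t by (simp add: abs_less_iff)
  have "Re (pw \<beta> z) = exp (\<beta> * ln r) * cos (\<beta> * \<theta>)"
    using False by (simp add: pw_def L Re_exp)
  also have "exp (\<beta> * ln r) = norm z powr \<beta>" using r by (simp add: powr_def mult.commute)
  finally have e: "Re (pw \<beta> z) = norm z powr \<beta> * cos (\<beta> * \<theta>)" .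
  have "cos (\<beta> * \<phi> / 2) \<le> cos \<bar>\<beta> * \<theta>\<bar>"
  proof (rule cos_monotone_0_pi_le)
    show "0 \<le> \<bar>\<beta> * \<theta>\<bar>" by simp
    show "\<bar>\<beta> * \<theta>\<bar> \<le> \<beta> * \<phi> / 2" using r \<beta> by (simp add: abs_mult mult_left_mono)
    show "\<beta> * \<phi> / 2 \<le> pi" using \<beta> pi_gt_zero by linarith
  qed
  then have "cos (\<beta> * \<phi> / 2) \<le> cos (\<beta> * \<theta>)" by simp
  then have "norm z powr \<beta> * cos (\<beta> * \<phi> / 2) \<le> norm z powr \<beta> * cos (\<beta> * \<theta>)"
    by (rule mult_left_mono) simp
  then show ?thesis unfolding e by (simp add: mult.commute)
qed

lemma pw_differentiable:
  assumes "z \<notin> \<real>\<^sub>\<le>\<^sub>0"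
  shows "(pw \<beta>) field_differentiable (at z)"
proof -
  have dLn: "(Ln has_field_derivative inverse z) (at z)" by (rule has_field_derivative_Ln[OF assms])
  have d1: "((\<lambda>w. of_real \<beta> * Ln w) has_field_derivative of_real \<beta> * inverse z) (at z)"
    using DERIV_cmult[OF dLn] .
  have "((\<lambda>w. exp (of_real \<beta> * Ln w)) has_field_derivative exp (of_real \<beta> * Ln z) * (of_real \<beta> * inverse z)) (at z)"
    by (rule DERIV_chain2[OF DERIV_exp d1])
  then have "(pw \<beta> has_field_derivative exp (of_real \<beta> * Ln z) * (of_real \<beta> * inverse z)) (at z)"
    by (rule has_field_derivative_transform_within_open[where S = "- \<real>\<^sub>\<le>\<^sub>0"])
       (use assms in \<open>auto simp: pw_def open_Compl\<close>)
  then show ?thesis using field_differentiable_def by blast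
qed

lemma pw_continuous_C0:
  assumes "\<phi> < 2 * pi" "0 < \<beta>"
  shows "continuous_on (C0 \<phi>) (pw \<beta>)"
proof (intro continuous_at_imp_continuous_on ballI)
  fix z assume z: "z \<in> C0 \<phi>"
  show "continuous (at z) (pw \<beta>)"
  proof (cases "z = 0")
    case True
    have "((\<lambda>w. norm w powr \<beta>) \<longlongrightarrow> 0) (at (0::complex))"
    proof (rule tendsto_zero_powrI)
      show "(norm \<longlongrightarrow> 0) (at (0::complex))" using tendsto_norm_zero[OF tendsto_ident_at[of 0 UNIV]] by simp
      show "((\<lambda>_. \<beta>) \<longlongrightarrow> \<beta>) (at (0::complex))" by (rule tendsto_const)
      show "\<forall>\<^sub>F x in at 0. 0 \<le> norm (x::complex)" by simp
    qed (rule assms(2))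
    then have "((\<lambda>w. norm (pw \<beta> w)) \<longlongrightarrow> 0) (at 0)" by (simp only: norm_pw)
    then have "(pw \<beta> \<longlongrightarrow> 0) (at 0)" by (rule tendsto_norm_zero_cancel)
    then show ?thesis using True by (simp add: continuous_at pw_def)
  next
    case False
    then show ?thesis using C0_not_nonpos[OF z assms(1)] pw_differentiable field_differentiable_imp_continuous_at by blast
  qed
qed


lemma large_R:
  fixes c \<delta> \<rho> \<beta> A :: real
  assumes c: "0 < c" and d: "0 < \<delta>" and rb: "\<rho> < \<beta>" and b: "0 < \<beta>"
  shows "\<exists>R. R > A \<and> exp (R powr \<rho> - c * R powr \<beta>) \<le> \<delta>"
proof -
  define T where "T = 2 * (\<bar>ln \<delta>\<bar> + 1) / c"
  have T: "T > 0" using c by (simp add: T_def add_nonneg_pos)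
  have ev1: "eventually (\<lambda>R. R powr (\<rho> - \<beta>) < c / 2) at_top"
    by (rule order_tendstoD(2)[OF tendsto_neg_powr[OF _ filterlim_ident]]) (use rb c in auto)
  have ev2: "eventually (\<lambda>R. R \<ge> max (max A 1) (T powr (1 / \<beta>)) + 1) at_top"
    by (rule eventually_ge_at_top)
  obtain R where R1: "R powr (\<rho> - \<beta>) < c / 2" and R2: "R \<ge> max (max A 1) (T powr (1 / \<beta>)) + 1"
    using eventually_happens[OF eventually_conj[OF ev1 ev2]] by auto
  have RA: "R > A" "R > 0" using R2 by auto
  have "T = (T powr (1 / \<beta>)) powr \<beta>" using T b by (simp add: powr_powr)
  also have "\<dots> \<le> R powr \<beta>" by (rule powr_mono2) (use b R2 in auto)
  finally have RT: "T \<le> R powr \<beta>" .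
  have "R powr \<rho> = R powr \<beta> * R powr (\<rho> - \<beta>)"
    by (simp add: powr_add[symmetric])
  then have "R powr \<rho> - c * R powr \<beta> = R powr \<beta> * (R powr (\<rho> - \<beta>) - c)"
    by (simp add: algebra_simps)
  also have "\<dots> \<le> R powr \<beta> * (- c / 2)"
    using R1 by (intro mult_left_mono) auto
  also have "\<dots> \<le> T * (- c / 2)"
    using RT c by (intro mult_right_mono_neg) auto
  also have "\<dots> = - (\<bar>ln \<delta>\<bar> + 1)" using c by (simp add: T_def field_simps)
  also have "\<dots> \<le> ln \<delta>" by linarith
  finally have "exp (R powr \<rho> - c * R powr \<beta>) \<le> exp (ln \<delta>)" by simp
  then show ?thesis using RA d by auto
qed


lemma PL_sector:
  fixes \<Phi> :: "complex \<Rightarrow> complex"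
  assumes \<phi>: "0 < \<phi>" "\<phi> < 2 * pi" and \<beta>: "0 < \<beta>" "\<beta> * \<phi> < pi" and rb: "\<rho> < \<beta>" and M: "0 \<le> M"
    and cont: "continuous_on (closure (S0 \<phi>)) \<Phi>"
    and hol: "\<And>w. w \<in> S0 \<phi> \<Longrightarrow> \<Phi> field_differentiable (at w)"
    and bd: "\<And>w. w \<in> frontier (S0 \<phi>) \<Longrightarrow> norm (\<Phi> w) \<le> M"
    and gr: "\<And>w. w \<in> closure (S0 \<phi>) \<Longrightarrow> norm w \<ge> R0 \<Longrightarrow> norm (\<Phi> w) \<le> exp (norm w powr \<rho>)"
    and z: "z \<in> S0 \<phi>"
  shows "norm (\<Phi> z) \<le> M"
proof -
  define \<kappa> where "\<kappa> = cos (\<beta> * \<phi> / 2)"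
  have \<kappa>: "\<kappa> > 0" unfolding \<kappa>_def
  proof (rule cos_gt_zero_pi)
    have "0 < \<beta> * \<phi>" using \<beta> \<phi> by simp
    then show "- (pi / 2) < \<beta> * \<phi> / 2" using pi_gt_zero by linarith
    show "\<beta> * \<phi> / 2 < pi / 2" using \<beta> by linarith
  qed
  have oS: "open (S0 \<phi>)" using open_S0 \<phi> by simp
  have clC: "closure (S0 \<phi>) \<subseteq> C0 \<phi>" by (rule closure_S0)
  define E where "E \<epsilon> w = exp (- of_real \<epsilon> * pw \<beta> w)" for \<epsilon> w
  have normE_eq: "norm (E \<epsilon> w) = exp (- \<epsilon> * Re (pw \<beta> w))" for \<epsilon> w
    by (simp add: E_def)
  have normE: "norm (E \<epsilon> w) \<le> exp (- (\<epsilon> * \<kappa>) * norm w powr \<beta>)" if w: "w \<in> C0 \<phi>" and e: "\<epsilon> \<ge> 0" for \<epsilon> w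
  proof -
    have "\<kappa> * norm w powr \<beta> \<le> Re (pw \<beta> w)" using Re_pw_ge[OF w \<phi> \<beta>] by (simp add: \<kappa>_def)
    then have "\<epsilon> * (\<kappa> * norm w powr \<beta>) \<le> \<epsilon> * Re (pw \<beta> w)" using e by (rule mult_left_mono)
    then show ?thesis unfolding normE_eq by simp
  qed
  have normE1: "norm (E \<epsilon> w) \<le> 1" if w: "w \<in> C0 \<phi>" and e: "\<epsilon> \<ge> 0" for \<epsilon> w
  proof -
    have "0 \<le> (\<epsilon> * \<kappa>) * norm w powr \<beta>" using e \<kappa> by simp
    then have "exp (- (\<epsilon> * \<kappa>) * norm w powr \<beta>) \<le> 1" by simp
    then show ?thesis using normE[OF w e] by linarith
  qed
  have Ecd: "E \<epsilon> field_differentiable (at w)" if wn: "w \<notin> \<real>\<^sub>\<le>\<^sub>0" for \<epsilon> w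
  proof -
    obtain D where D: "(pw \<beta> has_field_derivative D) (at w)"
      using pw_differentiable[OF wn] field_differentiable_def by blast
    have "((\<lambda>w. - of_real \<epsilon> * pw \<beta> w) has_field_derivative - of_real \<epsilon> * D) (at w)"
      using DERIV_cmult[OF D, of "- of_real \<epsilon>"] by simp
    from DERIV_chain2[OF DERIV_exp this] show ?thesis
      unfolding E_def field_differentiable_def by blast
  qed
  have Econt: "continuous_on (C0 \<phi>) (E \<epsilon>)" for \<epsilon>
    unfolding E_def by (intro continuous_intros pw_continuous_C0 \<phi> \<beta>)
  have step1: "norm (\<Phi> z * E \<epsilon> z) \<le> M + \<delta>" if e: "\<epsilon> > 0" and d: "\<delta> > 0" for \<epsilon> \<delta>
  proof -
    obtain R where R: "R > max (max (norm z) R0) 0" "exp (R powr \<rho> - (\<epsilon> * \<kappa>) * R powr \<beta>) \<le> \<delta>"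
      using large_R[of "\<epsilon> * \<kappa>" \<delta> \<rho> \<beta> "max (max (norm z) R0) 0"] e \<kappa> d rb \<beta> by auto
    have Rpos: "R > 0" and Rz: "R > norm z" and RR0: "R \<ge> R0" using R by auto
    define D where "D = S0 \<phi> \<inter> ball 0 R"
    define h where "h w = \<Phi> w * E \<epsilon> w" for w
    have oD: "open D" using oS by (simp add: D_def open_Int)
    have bD: "bounded D" by (simp add: D_def bounded_Int)
    have clD: "closure D \<subseteq> closure (S0 \<phi>) \<inter> cball 0 R"
      using closure_mono[of D "S0 \<phi>"] closure_mono[of D "ball 0 R"] closure_ball[OF Rpos] by (auto simp: D_def)
    have ch: "continuous_on (closure D) h"
      unfolding h_def
      by (intro continuous_on_mult continuous_on_subset[OF cont] continuous_on_subset[OF Econt])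
         (use clD clC in auto)
    have dh: "h field_differentiable (at w)" if w: "w \<in> D" for w
    proof -
      have wS: "w \<in> S0 \<phi>" using w by (simp add: D_def)
      have "w \<notin> \<real>\<^sub>\<le>\<^sub>0" using wS S0_Ln[of \<phi>] \<phi> by auto
      then show ?thesis unfolding h_def
        by (intro field_differentiable_mult hol[OF wS] Ecd)
    qed
    have fr: "norm (h w) \<le> M + \<delta>" if w: "w \<in> frontier D" for w
    proof -
      have wcl: "w \<in> closure D" and wD: "w \<notin> D" using w oD by (auto simp: frontier_def interior_open)
      have wS: "w \<in> closure (S0 \<phi>)" and wR: "norm w \<le> R" using wcl clD by auto
      have wC: "w \<in> C0 \<phi>" using wS clC by auto
      show ?thesis
      proof (cases "w \<in> S0 \<phi>")
        case True
        then have "norm w = R" using wD wR by (auto simp: D_def)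
        then have "norm (\<Phi> w) \<le> exp (R powr \<rho>)" using gr[OF wS] RR0 by simp
        moreover have "norm (E \<epsilon> w) \<le> exp (- (\<epsilon> * \<kappa>) * R powr \<beta>)"
          using normE[OF wC] e \<open>norm w = R\<close> by simp
        ultimately have "norm (h w) \<le> exp (R powr \<rho>) * exp (- (\<epsilon> * \<kappa>) * R powr \<beta>)"
          unfolding h_def norm_mult by (intro mult_mono) auto
        also have "\<dots> = exp (R powr \<rho> - (\<epsilon> * \<kappa>) * R powr \<beta>)" by (simp add: exp_add[symmetric])
        also have "\<dots> \<le> \<delta>" by (rule R(2))
        finally show ?thesis using M by simp
      next
        case False
        then have "w \<in> frontier (S0 \<phi>)" using wS oS by (simp add: frontier_def interior_open)
        then have "norm (\<Phi> w) \<le> M" by (rule bd)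
        moreover have "norm (E \<epsilon> w) \<le> 1" using normE1[OF wC] e by simp
        ultimately have "norm (h w) \<le> M * 1" unfolding h_def norm_mult by (intro mult_mono) (auto simp: M)
        then show ?thesis using d by simp
      qed
    qed
    have zD: "z \<in> D" using z Rz by (simp add: D_def)
    show ?thesis using max_principle[OF oD bD ch dh fr zD] by (simp add: h_def)
  qed
  define a where "a = Re (pw \<beta> z)"
  have step2: "norm (\<Phi> z) \<le> (M + t) * exp (t * a)" if t: "t > 0" for t
  proof -
    have "norm (\<Phi> z) * exp (- t * a) \<le> M + t"
      using step1[OF t t] by (simp add: norm_mult normE_eq a_def)
    then have "norm (\<Phi> z) * exp (- t * a) * exp (t * a) \<le> (M + t) * exp (t * a)"
      by (rule mult_right_mono) simp
    then show ?thesis by (simp add: mult.assoc exp_add[symmetric])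
  qed
  show ?thesis
  proof (rule ccontr)
    assume "\<not> ?thesis"
    then have gt: "norm (\<Phi> z) > M" by simp
    have "((\<lambda>t. (M + t) * exp (t * a)) \<longlongrightarrow> (M + 0) * exp (0 * a)) (at_right 0)"
      by (intro tendsto_intros)
    then have "((\<lambda>t. (M + t) * exp (t * a)) \<longlongrightarrow> M) (at_right 0)" by simp
    then have ev: "eventually (\<lambda>t. (M + t) * exp (t * a) < norm (\<Phi> z)) (at_right 0)"
      using gt order_tendstoD(2) by blast
    have ev2: "eventually (\<lambda>t. t > (0::real)) (at_right 0)" by (simp add: eventually_at_right_less)
    obtain t where "(M + t) * exp (t * a) < norm (\<Phi> z)" "t > 0"
      using eventually_happens[OF eventually_conj[OF ev ev2]] by auto
    then show False using step2 by (meson not_le)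
  qed
qed


lemma vec4_comp:
  "(vector [a, b, c, d] :: real^4) $ 1 = a" "(vector [a, b, c, d] :: real^4) $ 2 = b"
  "(vector [a, b, c, d] :: real^4) $ 3 = c" "(vector [a, b, c, d] :: real^4) $ 4 = d"
  by (simp_all add: vector_def)

lemma qreal_comp [simp]: "qreal x $ 1 = x" "qreal x $ 2 = 0" "qreal x $ 3 = 0" "qreal x $ 4 = 0"
  by (simp_all add: qreal_def vec4_comp)

lemma qmult_comp:
  "qmult p q $ 1 = p$1*q$1 - p$2*q$2 - p$3*q$3 - p$4*q$4"
  "qmult p q $ 2 = p$1*q$2 + p$2*q$1 + p$3*q$4 - p$4*q$3"
  "qmult p q $ 3 = p$1*q$3 - p$2*q$4 + p$3*q$1 + p$4*q$2"
  "qmult p q $ 4 = p$1*q$4 + p$2*q$3 - p$3*q$2 + p$4*q$1"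
  by (simp_all add: qmult_def vec4_comp)

lemma inner4: "inner (x::real^4) y = x$1*y$1 + x$2*y$2 + x$3*y$3 + x$4*y$4"
  by (simp add: inner_vec_def sum_4)

lemma vec4_eq: "(x::real^4) = y \<longleftrightarrow> x$1 = y$1 \<and> x$2 = y$2 \<and> x$3 = y$3 \<and> x$4 = y$4"
  by (simp add: vec_eq_iff forall_4)

lemma imag_unitsD:
  assumes "I \<in> imag_units" shows "I$1 = 0" "(I$2)^2 + (I$3)^2 + (I$4)^2 = 1"
  using assms by (auto simp: imag_units_def)

lemma norm_slice:
  assumes "I \<in> imag_units"
  shows "norm (qreal x + y *\<^sub>R I) = cmod (Complex x y)"
proof -
  have "(norm (qreal x + y *\<^sub>R I))^2 = x^2 + y^2 * ((I$2)^2 + (I$3)^2 + (I$4)^2)"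
    unfolding power2_norm_eq_inner inner4 using imag_unitsD[OF assms]
    by simp algebra
  also have "\<dots> = (cmod (Complex x y))^2" using imag_unitsD[OF assms] by (simp add: cmod_power2)
  finally show ?thesis by (simp add: power2_eq_iff_nonneg)
qed

lemma inner_qmultI_skew:
  assumes "I \<in> imag_units"
  shows "inner (qmult I w) v = - inner w (qmult I v)"
  using imag_unitsD(1)[OF assms] unfolding inner4 qmult_comp by (simp add: algebra_simps)

lemma inner_qmultI_iso:
  assumes "I \<in> imag_units"
  shows "inner (qmult I w) (qmult I v) = inner w v"
proof -
  have e: "(I$2)^2 = 1 - (I$3)^2 - (I$4)^2" using imag_unitsD(2)[OF assms] by simp
  show ?thesis
    using imag_unitsD[OF assms] unfolding inner4 qmult_comp by algebra
qed

lemma norm_qmultI: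
  assumes "I \<in> imag_units"
  shows "norm (qmult I w) = norm w"
  using inner_qmultI_iso[OF assms, of w w] by (simp add: norm_eq_sqrt_inner)

lemma bessel2:
  fixes u v w :: "'a::real_inner"
  assumes "norm u = 1" "norm v = 1" "inner u v = 0"
  shows "(inner w u)^2 + (inner w v)^2 \<le> (norm w)^2"
proof -
  define a where "a = inner w u"
  define b where "b = inner w v"
  have uu: "inner u u = 1" and vv: "inner v v = 1" using assms by (simp_all add: norm_eq_1)
  have "0 \<le> inner (w - a *\<^sub>R u - b *\<^sub>R v) (w - a *\<^sub>R u - b *\<^sub>R v)" by simp
  also have "\<dots> = inner w w - a^2 - b^2"
    using assms(3) uu vv
    by (simp add: inner_diff_left inner_diff_right inner_commute a_def b_def power2_eq_square algebra_simps)
  finally show ?thesis by (simp add: a_def b_def power2_norm_eq_inner)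
qed


lemma qreal_eq: "qreal x = x *\<^sub>R qreal 1"
  by (simp add: vec4_eq)

definition Qm :: "quat \<Rightarrow> real \<Rightarrow> complex \<Rightarrow> quat" where
  "Qm I \<zeta> z = qreal (Re (cis \<zeta> * z)) + Im (cis \<zeta> * z) *\<^sub>R I"

definition Tf :: "quat \<Rightarrow> quat \<Rightarrow> quat \<Rightarrow> complex" where
  "Tf I u w = Complex (inner w u) (inner w (qmult I u))"

lemma Qm_alt: "Qm I \<zeta> z = Re (cis \<zeta> * z) *\<^sub>R qreal 1 + Im (cis \<zeta> * z) *\<^sub>R I"
  unfolding Qm_def by (subst qreal_eq) (rule refl)

lemma bounded_linear_Qm: "bounded_linear (Qm I \<zeta>)"
proof -
  have a: "bounded_linear (\<lambda>x. Re (cis \<zeta> * x))"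
    by (rule bounded_linear_compose[OF bounded_linear_Re bounded_linear_mult_right])
  have b: "bounded_linear (\<lambda>x. Im (cis \<zeta> * x))"
    by (rule bounded_linear_compose[OF bounded_linear_Im bounded_linear_mult_right])
  show ?thesis unfolding Qm_alt
    by (rule bounded_linear_add, rule bounded_linear_compose[OF bounded_linear_scaleR_left a],
        rule bounded_linear_compose[OF bounded_linear_scaleR_left b])
qed

lemma continuous_Qm: "continuous_on S (Qm I \<zeta>)"
  by (rule linear_continuous_on[OF bounded_linear_Qm])

lemma norm_Qm:
  assumes "I \<in> imag_units" shows "norm (Qm I \<zeta> z) = cmod z"
proof -
  have "norm (Qm I \<zeta> z) = cmod (Complex (Re (cis \<zeta> * z)) (Im (cis \<zeta> * z)))"
    unfolding Qm_def by (rule norm_slice[OF assms])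
  also have "\<dots> = cmod (cis \<zeta> * z)" by (simp only: complex_surj)
  also have "\<dots> = cmod z" by (simp add: norm_mult)
  finally show ?thesis .
qed

lemma Qm_diff: "Qm I \<zeta> z - Qm I \<zeta> w = Qm I \<zeta> (z - w)"
  using linear_diff[OF bounded_linear.linear[OF bounded_linear_Qm]] by metis

lemma Qm_inj:
  assumes "I \<in> imag_units" "Qm I \<zeta> z = Qm I \<zeta> w" shows "z = w"
proof -
  have "cmod (z - w) = 0" using norm_Qm[OF assms(1), of \<zeta> "z - w"] Qm_diff[of I \<zeta> z w] assms(2) by simp
  then show ?thesis by simp
qed

lemma Qm_slice: "Qm I \<zeta> z \<in> slice_plane I"
  unfolding Qm_def slice_plane_def by blast

lemma Qm_rcis: "Qm I \<zeta> (rcis r \<theta>) = r *\<^sub>R qexp_I I (\<zeta> + \<theta>)"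
proof -
  have "cis \<zeta> * rcis r \<theta> = rcis r (\<zeta> + \<theta>)"
    by (simp add: rcis_def cis_mult mult.left_commute)
  then show ?thesis
    unfolding Qm_def qexp_I_def by (simp add: vec4_eq algebra_simps)
qed

lemma sector_Qm: "sector I \<zeta> \<phi> = Qm I \<zeta> ` S0 \<phi>"
proof safe
  fix x assume "x \<in> sector I \<zeta> \<phi>"
  then obtain r \<theta> where "x = r *\<^sub>R qexp_I I (\<zeta> + \<theta>)" "r > 0" "\<bar>\<theta>\<bar> < \<phi> / 2" by (auto simp: sector_def)
  then show "x \<in> Qm I \<zeta> ` S0 \<phi>" unfolding S0_def by (auto simp: Qm_rcis[symmetric])
next
  fix z assume "z \<in> S0 \<phi>"
  then obtain r \<theta> where "z = rcis r \<theta>" "r > 0" "\<bar>\<theta>\<bar> < \<phi> / 2" by (auto simp: S0_def)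
  then show "Qm I \<zeta> z \<in> sector I \<zeta> \<phi>" unfolding sector_def by (auto simp: Qm_rcis)
qed

lemma slice_Qm:
  assumes "q \<in> slice_plane I"
  shows "\<exists>z. q = Qm I 0 z"
proof -
  obtain x y where "q = qreal x + y *\<^sub>R I" using assms by (auto simp: slice_plane_def)
  then have "q = Qm I 0 (Complex x y)" by (simp add: Qm_def)
  then show ?thesis by blast
qed

lemma Tf_linear: "bounded_linear (Tf I u)"
proof -
  have "linear (Tf I u)"
    by (rule linearI) (simp_all add: Tf_def inner_add_left complex_eq_iff)
  then show ?thesis by (simp add: linear_conv_bounded_linear)
qed

lemma Iu_props:
  assumes "I \<in> imag_units" "norm u = 1"
  shows "norm (qmult I u) = 1" "inner u (qmult I u) = 0"
proof -
  show "norm (qmult I u) = 1" using norm_qmultI[OF assms(1)] assms(2) by simp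
  have "inner (qmult I u) u = - inner u (qmult I u)" by (rule inner_qmultI_skew[OF assms(1)])
  then show "inner u (qmult I u) = 0" by (simp add: inner_commute)
qed

lemma Tf_bound:
  assumes "I \<in> imag_units" "norm u = 1"
  shows "cmod (Tf I u w) \<le> norm w"
proof -
  have "(inner w u)^2 + (inner w (qmult I u))^2 \<le> (norm w)^2"
    by (rule bessel2) (use Iu_props[OF assms] assms in auto)
  then have "(cmod (Tf I u w))^2 \<le> (norm w)^2" by (simp add: Tf_def cmod_power2)
  then show ?thesis by (simp add: power2_le_iff_abs_le)
qed

lemma Tf_self:
  assumes "I \<in> imag_units" "norm u = 1"
  shows "Tf I u (c *\<^sub>R u) = of_real c"
  using Iu_props[OF assms] assms(2) by (simp add: Tf_def complex_eq_iff norm_eq_1)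

lemma Tf_mult_I:
  assumes "I \<in> imag_units"
  shows "Tf I u (qmult I w) = \<i> * Tf I u w"
  using inner_qmultI_skew[OF assms, of w u] inner_qmultI_iso[OF assms, of w u]
  by (simp add: Tf_def complex_eq_iff)


lemma Phi_hol:
  assumes I: "I \<in> imag_units" and sr: "slice_regular f \<Omega>" and z: "Qm I \<zeta> z \<in> \<Omega>"
  shows "(\<lambda>z. Tf I u (f (Qm I \<zeta> z))) field_differentiable (at z)"
proof -
  define w0 where "w0 = cis \<zeta> * z"
  have inO: "qreal (Re w0) + Im w0 *\<^sub>R I \<in> \<Omega>" using z by (simp add: Qm_def w0_def)
  obtain D where D: "((\<lambda>(s,t). f (qreal s + t *\<^sub>R I)) has_derivative D) (at (Re w0, Im w0))"
    and cr: "D (1, 0) + qmult I (D (0, 1)) = 0"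
    using sr inO I unfolding slice_regular_def by blast
  define P where "P \<omega> = (Re \<omega>, Im \<omega>)" for \<omega> :: complex
  have blP: "bounded_linear P" unfolding P_def
    by (intro bounded_linear_Pair bounded_linear_Re bounded_linear_Im)
  have dP: "(P has_derivative P) (at w0)" by (rule bounded_linear_imp_has_derivative[OF blP])
  have d1: "(((\<lambda>(s,t). f (qreal s + t *\<^sub>R I)) \<circ> P) has_derivative (D \<circ> P)) (at w0)"
    by (rule diff_chain_at[OF dP]) (simp add: P_def D)
  have dT: "(Tf I u has_derivative Tf I u) (at x)" for x
    by (rule bounded_linear_imp_has_derivative[OF Tf_linear])
  have d2: "((Tf I u \<circ> ((\<lambda>(s,t). f (qreal s + t *\<^sub>R I)) \<circ> P)) has_derivative (Tf I u \<circ> (D \<circ> P))) (at w0)"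
    by (rule diff_chain_at[OF d1 dT])
  have blD: "bounded_linear D" using D by (rule has_derivative_bounded_linear)
  interpret Dl: bounded_linear D by (rule blD)
  interpret Tl: bounded_linear "Tf I u" by (rule Tf_linear)
  define c where "c = Tf I u (D (1, 0))"
  have D10: "D (1, 0) = - qmult I (D (0, 1))" using cr by (simp add: eq_neg_iff_add_eq_0)
  have c01: "Tf I u (D (0, 1)) = \<i> * c"
  proof -
    have "c = - (\<i> * Tf I u (D (0, 1)))" unfolding c_def D10 Tl.neg Tf_mult_I[OF I] ..
    then show ?thesis by (simp add: algebra_simps)
  qed
  have lin: "(Tf I u \<circ> (D \<circ> P)) = (\<lambda>h. c * h)"
  proof
    fix h :: complex
    have "P h = Re h *\<^sub>R (1, 0) + Im h *\<^sub>R (0, 1)" by (simp add: P_def)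
    then have "D (P h) = Re h *\<^sub>R D (1, 0) + Im h *\<^sub>R D (0, 1)" by (simp only: Dl.add Dl.scaleR)
    then have "Tf I u (D (P h)) = Re h *\<^sub>R c + Im h *\<^sub>R (\<i> * c)" by (simp add: Tl.add Tl.scaleR c_def c01)
    also have "\<dots> = c * h" by (simp add: scaleR_conv_of_real complex_eq_iff algebra_simps)
    finally show "(Tf I u \<circ> (D \<circ> P)) h = c * h" by simp
  qed
  define \<Psi> where "\<Psi> \<omega> = Tf I u (f (qreal (Re \<omega>) + Im \<omega> *\<^sub>R I))" for \<omega>
  have "(Tf I u \<circ> ((\<lambda>(s,t). f (qreal s + t *\<^sub>R I)) \<circ> P)) = \<Psi>" by (auto simp: P_def \<Psi>_def)
  then have dPsi: "(\<Psi> has_field_derivative c) (at w0)"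
    using d2 lin by (simp add: has_field_derivative_def)
  have dm: "((\<lambda>z. cis \<zeta> * z) has_field_derivative cis \<zeta>) (at z)"
    by (auto intro!: derivative_eq_intros)
  have "((\<lambda>z. \<Psi> (cis \<zeta> * z)) has_field_derivative c * cis \<zeta>) (at z)"
    using DERIV_chain2[OF _ dm, of \<Psi> c] dPsi by (simp add: w0_def)
  moreover have "(\<lambda>z. \<Psi> (cis \<zeta> * z)) = (\<lambda>z. Tf I u (f (Qm I \<zeta> z)))" by (simp add: \<Psi>_def Qm_def)
  ultimately show ?thesis unfolding field_differentiable_def by auto
qed


lemma exists_slice: "\<exists>I\<in>imag_units. q \<in> slice_plane I"
proof -
  define n where "n = sqrt ((q$2)^2 + (q$3)^2 + (q$4)^2)"
  show ?thesis
  proof (cases "n = 0")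
    case True
    then have h: "(q$2)^2 + (q$3)^2 + (q$4)^2 = 0" by (simp add: n_def)
    have "(q$2)^2 = 0" "(q$3)^2 = 0" "(q$4)^2 = 0"
      using h zero_le_power2[of "q$2"] zero_le_power2[of "q$3"] zero_le_power2[of "q$4"] by linarith+
    then have z: "q$2 = 0" "q$3 = 0" "q$4 = 0" by simp_all
    define I :: quat where "I = vector [0, 1, 0, 0]"
    have "I \<in> imag_units" by (simp add: I_def imag_units_def vec4_comp)
    moreover have "q = qreal (q$1) + 0 *\<^sub>R I" using z by (simp add: vec4_eq)
    ultimately show ?thesis unfolding slice_plane_def by blast
  next
    case False
    have "n \<ge> 0" by (simp add: n_def)
    then have npos: "n > 0" using False by linarith
    define I :: quat where "I = vector [0, q$2 / n, q$3 / n, q$4 / n]"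
    have n2: "n^2 = (q$2)^2 + (q$3)^2 + (q$4)^2" by (simp add: n_def)
    have "(q$2 / n)^2 + (q$3 / n)^2 + (q$4 / n)^2 = ((q$2)^2 + (q$3)^2 + (q$4)^2) / n^2"
      by (simp add: power_divide add_divide_distrib)
    also have "\<dots> = 1" using npos unfolding n2[symmetric] by simp
    finally have "(q$2 / n)^2 + (q$3 / n)^2 + (q$4 / n)^2 = 1" .
    then have "I \<in> imag_units" by (simp add: I_def imag_units_def vec4_comp)
    moreover have "q = qreal (q$1) + n *\<^sub>R I" using npos by (simp add: vec4_eq I_def vec4_comp)
    ultimately show ?thesis unfolding slice_plane_def by blast
  qed
qed

lemma mm_upper:
  assumes cf: "continuous_on (closure \<Omega>) f" and p: "p \<in> closure \<Omega>"
  shows "norm (f p) \<le> max_modulus f \<Omega> (norm p)"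
proof -
  define K where "K = closure \<Omega> \<inter> sphere 0 (norm p)"
  have cK: "compact K" unfolding K_def by (intro closed_Int_compact closed_closure compact_sphere)
  have "continuous_on K (\<lambda>q. norm (f q))"
    by (rule continuous_on_subset[OF continuous_on_norm[OF cf]]) (simp add: K_def)
  then have "compact ((\<lambda>q. norm (f q)) ` K)" using cK by (rule compact_continuous_image)
  then have "bdd_above ((\<lambda>q. norm (f q)) ` K)" by (intro bounded_imp_bdd_above compact_imp_bounded)
  moreover have "norm (f p) \<in> (\<lambda>q. norm (f q)) ` K" using p by (simp add: K_def)
  ultimately have "norm (f p) \<le> Sup ((\<lambda>q. norm (f q)) ` K)" by (intro cSup_upper)
  moreover have "closure \<Omega> \<inter> {q. norm q = norm p} = K" by (auto simp: K_def)
  ultimately show ?thesis unfolding max_modulus_def by simp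
qed

lemma growth_from_order:
  assumes "order_of f \<Omega> < ereal \<rho>" "0 < \<rho>"
  shows "\<exists>R0. \<forall>r\<ge>R0. max_modulus f \<Omega> r \<le> exp (r powr \<rho>)"
proof -
  have "eventually (\<lambda>r. ereal (lnp (lnp (max_modulus f \<Omega> r)) / ln r) < ereal \<rho>) at_top"
    using Limsup_lessD assms(1) unfolding order_of_def by blast
  then obtain R1 where R1: "\<And>r. r \<ge> R1 \<Longrightarrow> lnp (lnp (max_modulus f \<Omega> r)) / ln r < \<rho>"
    by (auto simp: eventually_at_top_linorder)
  show ?thesis
  proof (intro exI allI impI)
    fix r assume r: "max R1 (exp 1) \<le> r"
    have r1: "r \<ge> exp 1" "r \<ge> R1" using r by auto
    have "0 < exp (1::real)" by simp
    then have rpos: "r > 0" using r1 by linarith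
    have "ln (exp 1) \<le> ln r" using r1 rpos by (subst ln_le_cancel_iff) auto
    then have lnr: "ln r \<ge> 1" by simp
    have "1 \<le> exp (1::real)" by simp
    then have "1 \<le> r" using r1 by linarith
    then have pw1: "1 \<le> r powr \<rho>" using assms(2) by (intro ge_one_powr_ge_zero) auto
    define m where "m = max_modulus f \<Omega> r"
    show "max_modulus f \<Omega> r \<le> exp (r powr \<rho>)"
    proof (cases "m \<le> exp 1")
      case True
      moreover have "exp 1 \<le> exp (r powr \<rho>)" using pw1 by simp
      ultimately show ?thesis unfolding m_def by linarith
    next
      case False
      then have mg: "m > exp 1" by simp
      have "1 < exp (1::real)" by simp
      then have m1: "m > 1" using mg by linarith
      have "ln (exp 1) < ln m" using mg m1 by (subst ln_less_cancel_iff) auto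
      then have lm: "ln m > 1" by simp
      have "lnp (lnp m) = ln (ln m)" using m1 lm by (simp add: lnp_def)
      then have "ln (ln m) / ln r < \<rho>" using R1[OF r1(2)] by (simp add: m_def)
      then have "ln (ln m) < \<rho> * ln r" using lnr by (simp add: divide_less_eq)
      then have "exp (ln (ln m)) < exp (\<rho> * ln r)" by simp
      then have "ln m < exp (\<rho> * ln r)" using lm by simp
      also have "exp (\<rho> * ln r) = r powr \<rho>" using rpos by (simp add: powr_def mult.commute)
      finally have "ln m < r powr \<rho>" .
      then have "exp (ln m) < exp (r powr \<rho>)" by simp
      then have "m < exp (r powr \<rho>)" using m1 by simp
      then show ?thesis by (simp add: m_def)
    qed
  qed
qed


theorem theorem4p4:
  fixes \<Omega> :: "quat set" and f :: "quat \<Rightarrow> quat" and \<alpha> M :: real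
  assumes "angular_domain \<Omega>"
    and "angle_opening \<Omega> = pi / \<alpha>"
    and "slice_regular f \<Omega>"
    and "continuous_on (closure \<Omega>) f"
    and "order_of f \<Omega> < ereal \<alpha>"
    and "M \<ge> 0"
    and "\<forall>q\<in>frontier \<Omega>. norm (f q) \<le> M"
  shows "\<forall>q\<in>\<Omega>. norm (f q) \<le> M"
proof
  fix q assume qO: "q \<in> \<Omega>"
  note ad = assms(1) and op = assms(2) and sr = assms(3) and cf = assms(4) and ord = assms(5)
    and M0 = assms(6) and fb = assms(7)
  have oO: "open \<Omega>" using ad by (simp add: angular_domain_def slice_domain_def)
  show "norm (f q) \<le> M"
  proof (cases "f q = 0")
    case True then show ?thesis using M0 by simp
  next
    case fq: False
    obtain I where I: "I \<in> imag_units" "q \<in> slice_plane I" using exists_slice by blast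
    obtain \<zeta> \<phi> where \<phi>: "0 < \<phi>" "\<phi> < 2 * pi" and sec: "\<Omega> \<inter> slice_plane I = sector I \<zeta> \<phi>"
      using ad I(1) unfolding angular_domain_def by blast
    define A where "A = {\<phi>. \<exists>I\<in>imag_units. \<exists>\<zeta>. 0 < \<phi> \<and> \<phi> < 2 * pi \<and> \<Omega> \<inter> slice_plane I = sector I \<zeta> \<phi>}"
    have \<phi>A: "\<phi> \<in> A" unfolding A_def using I(1) \<phi> sec by blast
    have bA: "bdd_above A" unfolding A_def by (rule bdd_aboveI[of _ "2 * pi"]) auto
    have "\<phi> \<le> Sup A" by (rule cSup_upper[OF \<phi>A bA])
    then have \<phi>le: "\<phi> \<le> pi / \<alpha>" using op by (simp add: angle_opening_def A_def)
    have \<alpha>pos: "\<alpha> > 0"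
    proof (rule ccontr)
      assume "\<not> \<alpha> > 0"
      then have "pi / \<alpha> \<le> 0" by (simp add: divide_nonneg_nonpos)
      then show False using \<phi>le \<phi> by linarith
    qed
    have \<alpha>\<phi>: "\<alpha> * \<phi> \<le> pi" using \<phi>le \<alpha>pos by (simp add: field_simps)
    obtain \<rho> where \<rho>: "max (order_of f \<Omega>) (ereal 0) < ereal \<rho>" "ereal \<rho> < ereal \<alpha>"
      using ereal_dense2[of "max (order_of f \<Omega>) (ereal 0)" "ereal \<alpha>"] ord \<alpha>pos by auto
    have \<rho>pos: "\<rho> > 0" and ord\<rho>: "order_of f \<Omega> < ereal \<rho>" and \<rho>\<alpha>: "\<rho> < \<alpha>" using \<rho> by auto
    obtain R0 where R0: "\<And>r. r \<ge> R0 \<Longrightarrow> max_modulus f \<Omega> r \<le> exp (r powr \<rho>)"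
      using growth_from_order[OF ord\<rho> \<rho>pos] by blast
    define \<beta> where "\<beta> = (\<rho> + \<alpha>) / 2"
    have \<beta>: "0 < \<beta>" "\<rho> < \<beta>" "\<beta> < \<alpha>" using \<rho>pos \<rho>\<alpha> by (auto simp: \<beta>_def)
    have \<beta>\<phi>: "\<beta> * \<phi> < pi"
    proof -
      have "\<beta> * \<phi> < \<alpha> * \<phi>" using \<beta>(3) \<phi>(1) by simp
      then show ?thesis using \<alpha>\<phi> by linarith
    qed
    define u where "u = (1 / norm (f q)) *\<^sub>R f q"
    have nu: "norm u = 1" using fq by (simp add: u_def)
    have fqu: "f q = norm (f q) *\<^sub>R u" using fq by (simp add: u_def)
    define \<Phi> where "\<Phi> z = Tf I u (f (Qm I \<zeta> z))" for z
    have secQ: "\<Omega> \<inter> slice_plane I = Qm I \<zeta> ` S0 \<phi>" using sec sector_Qm by simp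
    have QS: "Qm I \<zeta> w \<in> \<Omega>" if "w \<in> S0 \<phi>" for w using secQ that by blast
    have QcS: "Qm I \<zeta> ` closure (S0 \<phi>) \<subseteq> closure \<Omega>"
      by (rule image_closure_subset[OF continuous_Qm closed_closure]) (use QS closure_subset in blast)
    have oS: "open (S0 \<phi>)" using open_S0 \<phi> by simp
    have hol: "\<Phi> field_differentiable (at w)" if "w \<in> S0 \<phi>" for w
      unfolding \<Phi>_def by (rule Phi_hol[OF I(1) sr QS[OF that]])
    have cont: "continuous_on (closure (S0 \<phi>)) \<Phi>"
      unfolding \<Phi>_def
      by (rule continuous_on_compose2[OF linear_continuous_on[OF Tf_linear]],
          rule continuous_on_compose2[OF cf continuous_Qm]) (use QcS in auto)
    have bd: "norm (\<Phi> w) \<le> M" if w: "w \<in> frontier (S0 \<phi>)" for w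
    proof -
      have wc: "w \<in> closure (S0 \<phi>)" and wn: "w \<notin> S0 \<phi>" using w oS by (auto simp: frontier_def interior_open)
      have "Qm I \<zeta> w \<in> closure \<Omega>" using QcS wc by blast
      moreover have "Qm I \<zeta> w \<notin> \<Omega>"
      proof
        assume "Qm I \<zeta> w \<in> \<Omega>"
        then have "Qm I \<zeta> w \<in> Qm I \<zeta> ` S0 \<phi>" using secQ Qm_slice by blast
        then obtain w' where "w' \<in> S0 \<phi>" "Qm I \<zeta> w = Qm I \<zeta> w'" by blast
        then show False using Qm_inj[OF I(1)] wn by blast
      qed
      ultimately have "Qm I \<zeta> w \<in> frontier \<Omega>" using oO by (simp add: frontier_def interior_open)
      then have "norm (f (Qm I \<zeta> w)) \<le> M" using fb by blast
      moreover have "norm (\<Phi> w) \<le> norm (f (Qm I \<zeta> w))" unfolding \<Phi>_def by (rule Tf_bound[OF I(1) nu])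
      ultimately show ?thesis by linarith
    qed
    have gr: "norm (\<Phi> w) \<le> exp (norm w powr \<rho>)" if w: "w \<in> closure (S0 \<phi>)" "norm w \<ge> R0" for w
    proof -
      have p: "Qm I \<zeta> w \<in> closure \<Omega>" using QcS w by blast
      have "norm (\<Phi> w) \<le> norm (f (Qm I \<zeta> w))" unfolding \<Phi>_def by (rule Tf_bound[OF I(1) nu])
      also have "\<dots> \<le> max_modulus f \<Omega> (norm (Qm I \<zeta> w))" by (rule mm_upper[OF cf p])
      also have "\<dots> = max_modulus f \<Omega> (norm w)" by (simp add: norm_Qm[OF I(1)])
      also have "\<dots> \<le> exp (norm w powr \<rho>)" by (rule R0[OF w(2)])
      finally show ?thesis .
    qed
    obtain z0 where z0: "z0 \<in> S0 \<phi>" "q = Qm I \<zeta> z0" using secQ qO I(2) by blast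
    have "norm (\<Phi> z0) \<le> M"
      by (rule PL_sector[OF \<phi> \<beta>(1) \<beta>\<phi> \<beta>(2) M0 cont hol bd gr z0(1)])
    moreover have "\<Phi> z0 = of_real (norm (f q))"
      unfolding \<Phi>_def z0(2)[symmetric] by (subst fqu) (rule Tf_self[OF I(1) nu])
    ultimately show ?thesis by simp
  qed
qed


end
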